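(* Let $k$ be a field, $\Gamma=(V,E)$ a finite connected quiver and $I\subseteq R^2$ a two-sided ideal of $k\Gamma$ such that $k\Gamma/I$ is acyclic. Then $\dim_k HH^1(k\Gamma/I)=\dim_k\mathfrak{F}_2(I)+1-|V|$.
   Context: For a path $p$, $t(p),h(p)$ are its start and end vertex; paths multiply by left-to-right concatenation (product $0$ if they do not concatenate). $R$ is the ideal generated by $E$, $\overline{x}=x+I$. $HH^1(k\Gamma/I)$ is the space of derivations of $k\Gamma/I$ modulo inner derivations. A differential operator from $k\Gamma$ to $k\Gamma/I$ is a $k$-linear map with $D(xy)=D(x)\overline{y}+\overline{x}D(y)$. $\mathscr{Q}$ is a fixed $k$-basis of $k\Gamma/I$ consisting of residue classes of paths and containing the classes of all vertices and arrows; for $\overline{s}\in\mathscr{Q}$, $t(\overline{s}),h(\overline{s})$ are the start/end vertex of any representing path (well defined). $k\Gamma/I$ is acyclic if every $\overline{q}\in\mathscr{Q}$ with $t(\overline{q})=h(\overline{q})$ is the class of a vertex. For $r\in E$ and $\overline{s}\in\mathscr{Q}$ with $t(r)=t(\overline{s})$, $h(r)=h(\overline{s})$, $D_{r,\overline{s}}$ is the unique differential operator $k\Gamma\to k\Gamma/I$ with $D_{r,\overline{s}}(r)=\overline{s}$ and vanishing on all other arrows and vertices; $\mathfrak{D}_2$ is their $k$-span and $\mathfrak{F}_2(I)=\{D\in\mathfrak{D}_2\mid D(I)=0\}$. *)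

theory Defs
  imports Complex_Main "HOL-Library.Function_Algebras"
begin

text \<open>A path is a pair (v, es): its start vertex v and its list of arrows es
  (es = [] gives the trivial path at v). Paths are composed left to right.\<close>

type_synonym ('v,'e) qpath = "'v \<times> 'e list"

definition finite_connected_quiver :: "'v set \<Rightarrow> 'e set \<Rightarrow> ('e \<Rightarrow> 'v) \<Rightarrow> ('e \<Rightarrow> 'v) \<Rightarrow> bool" where
  "finite_connected_quiver V E s t \<longleftrightarrow>
     finite V \<and> finite E \<and> V \<noteq> {} \<and> s ` E \<subseteq> V \<and> t ` E \<subseteq> V \<and>
     (\<forall>u\<in>V. \<forall>w\<in>V. (u, w) \<in> ({(s e, t e) | e. e \<in> E} \<union> {(t e, s e) | e. e \<in> E})\<^sup>*)"

definition is_path :: "'v set \<Rightarrow> 'e set \<Rightarrow> ('e \<Rightarrow> 'v) \<Rightarrow> ('e \<Rightarrow> 'v) \<Rightarrow> ('v,'e) qpath \<Rightarrow> bool" where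
  "is_path V E s t p \<longleftrightarrow> fst p \<in> V \<and> set (snd p) \<subseteq> E \<and>
     (snd p \<noteq> [] \<longrightarrow> s (hd (snd p)) = fst p) \<and>
     (\<forall>i. Suc i < length (snd p) \<longrightarrow> t (snd p ! i) = s (snd p ! Suc i))"

definition pstart :: "('v,'e) qpath \<Rightarrow> 'v" where
  "pstart p = fst p"

definition pend :: "('e \<Rightarrow> 'v) \<Rightarrow> ('v,'e) qpath \<Rightarrow> 'v" where
  "pend t p = (if snd p = [] then fst p else t (last (snd p)))"

definition path_alg :: "'v set \<Rightarrow> 'e set \<Rightarrow> ('e \<Rightarrow> 'v) \<Rightarrow> ('e \<Rightarrow> 'v) \<Rightarrow> (('v,'e) qpath \<Rightarrow> 'k::field) set" where
  "path_alg V E s t = {f. finite {p. f p \<noteq> 0} \<and> (\<forall>p. f p \<noteq> 0 \<longrightarrow> is_path V E s t p)}"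

definition pvec :: "('v,'e) qpath \<Rightarrow> (('v,'e) qpath \<Rightarrow> 'k::field)" where
  "pvec p = (\<lambda>q. if q = p then 1 else 0)"

text \<open>Multiplication of k\<Gamma>, bilinear extension of left-to-right concatenation
  (product of non-concatenable paths is 0): the coefficient of the path (v, es) in f*g
  sums over all ways of splitting (v, es) as a concatenation of two paths.\<close>
definition pmult :: "('e \<Rightarrow> 'v) \<Rightarrow> (('v,'e) qpath \<Rightarrow> 'k::field) \<Rightarrow> (('v,'e) qpath \<Rightarrow> 'k) \<Rightarrow> (('v,'e) qpath \<Rightarrow> 'k)" where
  "pmult t f g = (\<lambda>(v, es). \<Sum>i\<le>length es. f (v, take i es) * g (pend t (v, take i es), drop i es))"

definition is_ideal :: "'v set \<Rightarrow> 'e set \<Rightarrow> ('e \<Rightarrow> 'v) \<Rightarrow> ('e \<Rightarrow> 'v) \<Rightarrow> (('v,'e) qpath \<Rightarrow> 'k::field) set \<Rightarrow> bool" where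
  "is_ideal V E s t J \<longleftrightarrow> J \<subseteq> path_alg V E s t \<and> 0 \<in> J \<and>
     (\<forall>x\<in>J. \<forall>y\<in>J. x + y \<in> J) \<and> (\<forall>c. \<forall>x\<in>J. (\<lambda>p. c * x p) \<in> J) \<and>
     (\<forall>x\<in>path_alg V E s t. \<forall>y\<in>J. pmult t x y \<in> J \<and> pmult t y x \<in> J)"

definition gen_ideal :: "'v set \<Rightarrow> 'e set \<Rightarrow> ('e \<Rightarrow> 'v) \<Rightarrow> ('e \<Rightarrow> 'v) \<Rightarrow> (('v,'e) qpath \<Rightarrow> 'k::field) set \<Rightarrow> (('v,'e) qpath \<Rightarrow> 'k) set" where
  "gen_ideal V E s t S = \<Inter>{J. is_ideal V E s t J \<and> S \<subseteq> J}"

definition arrow_ideal :: "'v set \<Rightarrow> 'e set \<Rightarrow> ('e \<Rightarrow> 'v) \<Rightarrow> ('e \<Rightarrow> 'v) \<Rightarrow> (('v,'e) qpath \<Rightarrow> 'k::field) set" where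
  "arrow_ideal V E s t = gen_ideal V E s t {pvec (s e, [e]) | e. e \<in> E}"

definition arrow_ideal_sq :: "'v set \<Rightarrow> 'e set \<Rightarrow> ('e \<Rightarrow> 'v) \<Rightarrow> ('e \<Rightarrow> 'v) \<Rightarrow> (('v,'e) qpath \<Rightarrow> 'k::field) set" where
  "arrow_ideal_sq V E s t = gen_ideal V E s t
     {pmult t a b | a b. a \<in> arrow_ideal V E s t \<and> b \<in> arrow_ideal V E s t}"

text \<open>The quotient k\<Gamma>/I is presented (up to isomorphism) as a type 'a with addition,
  scalar multiplication sc and multiplication mul, together with the residue map
  \<pi> : k\<Gamma> \<rightarrow> 'a, which is a surjective algebra homomorphism with kernel I.\<close>
definition quotient_presentation ::
  "'v set \<Rightarrow> 'e set \<Rightarrow> ('e \<Rightarrow> 'v) \<Rightarrow> ('e \<Rightarrow> 'v) \<Rightarrow> (('v,'e) qpath \<Rightarrow> 'k::field) set \<Rightarrow>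
   ((('v,'e) qpath \<Rightarrow> 'k) \<Rightarrow> 'a::ab_group_add) \<Rightarrow> ('k \<Rightarrow> 'a \<Rightarrow> 'a) \<Rightarrow> ('a \<Rightarrow> 'a \<Rightarrow> 'a) \<Rightarrow> bool" where
  "quotient_presentation V E s t I \<pi> sc mul \<longleftrightarrow>
     (\<forall>x\<in>path_alg V E s t. \<forall>y\<in>path_alg V E s t.
        \<pi> (x + y) = \<pi> x + \<pi> y \<and> \<pi> (pmult t x y) = mul (\<pi> x) (\<pi> y)) \<and>
     (\<forall>c. \<forall>x\<in>path_alg V E s t. \<pi> (\<lambda>p. c * x p) = sc c (\<pi> x)) \<and>
     \<pi> ` path_alg V E s t = UNIV \<and>
     (\<forall>x\<in>path_alg V E s t. \<pi> x = 0 \<longleftrightarrow> x \<in> I)"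

definition fscale :: "('k \<Rightarrow> 'a \<Rightarrow> 'a) \<Rightarrow> 'k \<Rightarrow> ('b \<Rightarrow> 'a) \<Rightarrow> ('b \<Rightarrow> 'a)" where
  "fscale sc c f = (\<lambda>x. sc c (f x))"

definition quot_dim :: "('k::field \<Rightarrow> 'b::ab_group_add \<Rightarrow> 'b) \<Rightarrow> 'b set \<Rightarrow> 'b set \<Rightarrow> nat" where
  "quot_dim scale U W = vector_space.dim scale
     (SOME C. module.subspace scale C \<and> C \<subseteq> U \<and> C \<inter> W = {0} \<and>
              (\<forall>u\<in>U. \<exists>c\<in>C. \<exists>w\<in>W. u = c + w))"

definition is_derivation :: "('k \<Rightarrow> 'a \<Rightarrow> 'a) \<Rightarrow> ('a \<Rightarrow> 'a \<Rightarrow> 'a::ab_group_add) \<Rightarrow> ('a \<Rightarrow> 'a) \<Rightarrow> bool" where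
  "is_derivation sc mul d \<longleftrightarrow>
     (\<forall>a b. d (a + b) = d a + d b) \<and> (\<forall>c a. d (sc c a) = sc c (d a)) \<and>
     (\<forall>a b. d (mul a b) = mul (d a) b + mul a (d b))"

definition derivations :: "('k \<Rightarrow> 'a \<Rightarrow> 'a) \<Rightarrow> ('a \<Rightarrow> 'a \<Rightarrow> 'a::ab_group_add) \<Rightarrow> ('a \<Rightarrow> 'a) set" where
  "derivations sc mul = {d. is_derivation sc mul d}"

definition inner_derivations :: "('a \<Rightarrow> 'a \<Rightarrow> 'a::ab_group_add) \<Rightarrow> ('a \<Rightarrow> 'a) set" where
  "inner_derivations mul = {d. \<exists>a. d = (\<lambda>x. mul a x - mul x a)}"

text \<open>dim_k HH^1(A) = dim_k (Der(A) / Inn(A)).\<close>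
definition hh1_dim :: "('k::field \<Rightarrow> 'a \<Rightarrow> 'a) \<Rightarrow> ('a \<Rightarrow> 'a \<Rightarrow> 'a::ab_group_add) \<Rightarrow> nat" where
  "hh1_dim sc mul = quot_dim (fscale sc) (derivations sc mul) (inner_derivations mul)"

definition path_basis :: "'v set \<Rightarrow> 'e set \<Rightarrow> ('e \<Rightarrow> 'v) \<Rightarrow> ('e \<Rightarrow> 'v) \<Rightarrow>
   ((('v,'e) qpath \<Rightarrow> 'k::field) \<Rightarrow> 'a::ab_group_add) \<Rightarrow> ('k \<Rightarrow> 'a \<Rightarrow> 'a) \<Rightarrow> 'a set \<Rightarrow> bool" where
  "path_basis V E s t \<pi> sc Q \<longleftrightarrow>
     \<not> module.dependent sc Q \<and> module.span sc Q = UNIV \<and>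
     (\<forall>q\<in>Q. \<exists>p. is_path V E s t p \<and> q = \<pi> (pvec p)) \<and>
     (\<forall>v\<in>V. \<pi> (pvec (v, [])) \<in> Q) \<and>
     (\<forall>e\<in>E. \<pi> (pvec (s e, [e])) \<in> Q)"

definition qstart :: "'v set \<Rightarrow> 'e set \<Rightarrow> ('e \<Rightarrow> 'v) \<Rightarrow> ('e \<Rightarrow> 'v) \<Rightarrow>
   ((('v,'e) qpath \<Rightarrow> 'k::field) \<Rightarrow> 'a) \<Rightarrow> 'a \<Rightarrow> 'v" where
  "qstart V E s t \<pi> q = pstart (SOME p. is_path V E s t p \<and> \<pi> (pvec p) = q)"

definition qend :: "'v set \<Rightarrow> 'e set \<Rightarrow> ('e \<Rightarrow> 'v) \<Rightarrow> ('e \<Rightarrow> 'v) \<Rightarrow>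
   ((('v,'e) qpath \<Rightarrow> 'k::field) \<Rightarrow> 'a) \<Rightarrow> 'a \<Rightarrow> 'v" where
  "qend V E s t \<pi> q = pend t (SOME p. is_path V E s t p \<and> \<pi> (pvec p) = q)"

definition acyclic_wrt :: "'v set \<Rightarrow> 'e set \<Rightarrow> ('e \<Rightarrow> 'v) \<Rightarrow> ('e \<Rightarrow> 'v) \<Rightarrow>
   ((('v,'e) qpath \<Rightarrow> 'k::field) \<Rightarrow> 'a) \<Rightarrow> 'a set \<Rightarrow> bool" where
  "acyclic_wrt V E s t \<pi> Q \<longleftrightarrow>
     (\<forall>q\<in>Q. qstart V E s t \<pi> q = qend V E s t \<pi> q \<longrightarrow> (\<exists>v\<in>V. q = \<pi> (pvec (v, []))))"

text \<open>Differential operators k\<Gamma> \<rightarrow> k\<Gamma>/I (k-linear, twisted Leibniz rule); as maps on the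
  carrier k\<Gamma> they are taken extensional (0 outside k\<Gamma>).\<close>
definition is_diffop :: "'v set \<Rightarrow> 'e set \<Rightarrow> ('e \<Rightarrow> 'v) \<Rightarrow> ('e \<Rightarrow> 'v) \<Rightarrow>
   ((('v,'e) qpath \<Rightarrow> 'k::field) \<Rightarrow> 'a::ab_group_add) \<Rightarrow> ('k \<Rightarrow> 'a \<Rightarrow> 'a) \<Rightarrow> ('a \<Rightarrow> 'a \<Rightarrow> 'a) \<Rightarrow>
   ((('v,'e) qpath \<Rightarrow> 'k) \<Rightarrow> 'a) \<Rightarrow> bool" where
  "is_diffop V E s t \<pi> sc mul D \<longleftrightarrow>
     (\<forall>x\<in>path_alg V E s t. \<forall>y\<in>path_alg V E s t.
        D (x + y) = D x + D y \<and> D (pmult t x y) = mul (D x) (\<pi> y) + mul (\<pi> x) (D y)) \<and>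
     (\<forall>c. \<forall>x\<in>path_alg V E s t. D (\<lambda>p. c * x p) = sc c (D x)) \<and>
     (\<forall>x. x \<notin> path_alg V E s t \<longrightarrow> D x = 0)"

definition Drs :: "'v set \<Rightarrow> 'e set \<Rightarrow> ('e \<Rightarrow> 'v) \<Rightarrow> ('e \<Rightarrow> 'v) \<Rightarrow>
   ((('v,'e) qpath \<Rightarrow> 'k::field) \<Rightarrow> 'a::ab_group_add) \<Rightarrow> ('k \<Rightarrow> 'a \<Rightarrow> 'a) \<Rightarrow> ('a \<Rightarrow> 'a \<Rightarrow> 'a) \<Rightarrow>
   'e \<Rightarrow> 'a \<Rightarrow> ((('v,'e) qpath \<Rightarrow> 'k) \<Rightarrow> 'a)" where
  "Drs V E s t \<pi> sc mul r q = (THE D. is_diffop V E s t \<pi> sc mul D \<and>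
      D (pvec (s r, [r])) = q \<and>
      (\<forall>e\<in>E. e \<noteq> r \<longrightarrow> D (pvec (s e, [e])) = 0) \<and>
      (\<forall>v\<in>V. D (pvec (v, [])) = 0))"

definition frakD2 :: "'v set \<Rightarrow> 'e set \<Rightarrow> ('e \<Rightarrow> 'v) \<Rightarrow> ('e \<Rightarrow> 'v) \<Rightarrow>
   ((('v,'e) qpath \<Rightarrow> 'k::field) \<Rightarrow> 'a::ab_group_add) \<Rightarrow> ('k \<Rightarrow> 'a \<Rightarrow> 'a) \<Rightarrow> ('a \<Rightarrow> 'a \<Rightarrow> 'a) \<Rightarrow>
   'a set \<Rightarrow> ((('v,'e) qpath \<Rightarrow> 'k) \<Rightarrow> 'a) set" where
  "frakD2 V E s t \<pi> sc mul Q = module.span (fscale sc)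
     {Drs V E s t \<pi> sc mul r q | r q. r \<in> E \<and> q \<in> Q \<and>
        s r = qstart V E s t \<pi> q \<and> t r = qend V E s t \<pi> q}"

definition frakF2 :: "'v set \<Rightarrow> 'e set \<Rightarrow> ('e \<Rightarrow> 'v) \<Rightarrow> ('e \<Rightarrow> 'v) \<Rightarrow>
   (('v,'e) qpath \<Rightarrow> 'k::field) set \<Rightarrow>
   ((('v,'e) qpath \<Rightarrow> 'k) \<Rightarrow> 'a::ab_group_add) \<Rightarrow> ('k \<Rightarrow> 'a \<Rightarrow> 'a) \<Rightarrow> ('a \<Rightarrow> 'a \<Rightarrow> 'a) \<Rightarrow>
   'a set \<Rightarrow> ((('v,'e) qpath \<Rightarrow> 'k) \<Rightarrow> 'a) set" where
  "frakF2 V E s t I \<pi> sc mul Q = {D \<in> frakD2 V E s t \<pi> sc mul Q. \<forall>x\<in>I. D x = 0}"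

end

theory Submission
  imports Defs
begin


definition conc :: "('v,'e) qpath \<Rightarrow> ('v,'e) qpath \<Rightarrow> ('v,'e) qpath" where
  "conc p q = (fst p, snd p @ snd q)"

definition smulf :: "'k::field \<Rightarrow> ('b \<Rightarrow> 'k) \<Rightarrow> ('b \<Rightarrow> 'k)" where
  "smulf c x = (\<lambda>p. c * x p)"

lemma pend_simp: "pend t (v, es) = (if es = [] then v else t (last es))"
  by (simp add: pend_def)

lemma pmult_apply: "pmult t f g (v, es) =
   (\<Sum>i\<le>length es. f (v, take i es) * g (pend t (v, take i es), drop i es))"
  by (simp add: pmult_def)

lemma pmult_add_left: "pmult t (x + y) z = pmult t x z + pmult t y z"
  by (rule ext) (auto simp: pmult_def distrib_right sum.distrib split: prod.splits)

lemma pmult_add_right: "pmult t x (y + z) = pmult t x y + pmult t x z"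
  by (rule ext) (auto simp: pmult_def distrib_left sum.distrib split: prod.splits)

lemma pmult_smulf_left: "pmult t (smulf c x) z = smulf c (pmult t x z)"
  by (rule ext) (auto simp: pmult_def smulf_def sum_distrib_left mult.assoc split: prod.splits)

lemma pmult_smulf_right: "pmult t x (smulf c z) = smulf c (pmult t x z)"
  by (rule ext) (auto simp: pmult_def smulf_def sum_distrib_left mult.assoc mult.left_commute split: prod.splits)

lemma pmult_zero_left[simp]: "pmult t 0 z = 0"
  by (rule ext) (auto simp: pmult_def split: prod.splits)

lemma pmult_zero_right[simp]: "pmult t x 0 = 0"
  by (rule ext) (auto simp: pmult_def split: prod.splits)

lemma pend_take_drop:
  assumes "j + k \<le> length es"
  shows "pend t (pend t (v, take j es), take k (drop j es)) = pend t (v, take (j+k) es)"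
proof (cases "k = 0")
  case True then show ?thesis by (simp add: pend_def)
next
  case False
  then have ne: "take k (drop j es) \<noteq> []" using assms by auto
  have "take (j+k) es = take j es @ take k (drop j es)" by (simp add: take_add)
  then show ?thesis using ne by (simp add: pend_def)
qed

lemma pmult_assoc: "pmult t (pmult t f g) h = pmult t f (pmult t g h)"
proof (rule ext, clarify)
  fix v :: 'a and es :: "'b list"
  let ?n = "length es"
  define F where "F j k = f (v, take j es) * g (pend t (v, take j es), take k (drop j es)) *
       h (pend t (v, take (j+k) es), drop (j+k) es)" for j k
  have "pmult t (pmult t f g) h (v, es) =
     (\<Sum>i\<le>?n. \<Sum>j\<le>i. f (v, take j (take i es)) * g (pend t (v, take j (take i es)), drop j (take i es))
        * h (pend t (v, take i es), drop i es))"
    by (simp add: pmult_apply sum_distrib_right min_absorb1)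
  also have "\<dots> = (\<Sum>i\<le>?n. \<Sum>j\<le>i. F j (i - j))"
    by (intro sum.cong refl) (simp add: F_def drop_take min_absorb1)
  also have "\<dots> = (\<Sum>i\<in>{..?n}. \<Sum>j\<in>{j\<in>{..?n}. j \<le> i}. F j (i - j))"
    by (intro sum.cong refl) auto
  also have "\<dots> = (\<Sum>j\<in>{..?n}. \<Sum>i\<in>{i\<in>{..?n}. j \<le> i}. F j (i - j))"
    by (rule sum.swap_restrict) auto
  also have "\<dots> = (\<Sum>j\<le>?n. \<Sum>k\<le>?n - j. F j k)"
  proof (rule sum.cong[OF refl])
    fix j assume "j \<in> {..?n}"
    have "{i\<in>{..?n}. j \<le> i} = (\<lambda>k. k + j) ` {..?n - j}"
    proof (intro set_eqI iffI)
      fix x assume "x \<in> {i\<in>{..?n}. j \<le> i}"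
      then have "x = (x - j) + j" "x - j \<in> {..?n - j}" by auto
      then show "x \<in> (\<lambda>k. k + j) ` {..?n - j}" by blast
    qed (use \<open>j \<in> {..?n}\<close> in auto)
    then show "(\<Sum>i\<in>{i\<in>{..?n}. j \<le> i}. F j (i - j)) = (\<Sum>k\<le>?n - j. F j k)"
      by (simp add: sum.reindex inj_on_def)
  qed
  also have "\<dots> = pmult t f (pmult t g h) (v, es)"
  proof -
    have "pmult t f (pmult t g h) (v, es) = (\<Sum>j\<le>?n. \<Sum>k\<le>?n - j. f (v, take j es) *
       (g (pend t (v, take j es), take k (drop j es)) *
        h (pend t (pend t (v, take j es), take k (drop j es)), drop k (drop j es))))"
      by (simp add: pmult_apply sum_distrib_left)
    also have "\<dots> = (\<Sum>j\<le>?n. \<Sum>k\<le>?n - j. F j k)"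
      by (intro sum.cong refl) (auto simp: F_def pend_take_drop mult.assoc add.commute)
    finally show ?thesis by simp
  qed
  finally show "pmult t (pmult t f g) h (v, es) = pmult t f (pmult t g h) (v, es)" .
qed

lemma pvec_mult: "pmult t (pvec p) (pvec p') =
   (if pend t p = fst p' then pvec (conc p p') else 0)"
proof (rule ext, clarify)
  fix u gs
  obtain v es where p: "p = (v, es)" by (cases p)
  let ?n = "length es"
  have "pmult t (pvec p) (pvec p') (u, gs) =
     (\<Sum>i\<le>length gs. if i = ?n then (if u = v \<and> take ?n gs = es then pvec p' (pend t p, drop ?n gs) else 0) else 0)"
    unfolding pmult_apply
    by (intro sum.cong refl) (auto simp: pvec_def p)
  also have "\<dots> = (if ?n \<le> length gs \<and> u = v \<and> take ?n gs = es then pvec p' (pend t p, drop ?n gs) else 0)"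
    by (simp add: sum.delta)
  also have "\<dots> = (if pend t p = fst p' then pvec (conc p p') else 0) (u, gs)"
    by (cases p') (auto simp: pvec_def conc_def p append_eq_conv_conj; metis append_take_drop_id)
  finally show "pmult t (pvec p) (pvec p') (u, gs) = (if pend t p = fst p' then pvec (conc p p') else 0) (u, gs)" .
qed

lemma is_path_conc:
  assumes "is_path V E s t p" "is_path V E s t p'" "pend t p = fst p'"
  shows "is_path V E s t (conc p p')" and "pend t (conc p p') = pend t p'"
proof -
  obtain v es where p: "p = (v, es)" by (cases p)
  obtain w fs where p': "p' = (w, fs)" by (cases p')
  have A: "v \<in> V" "set es \<subseteq> E" "es \<noteq> [] \<Longrightarrow> s (hd es) = v"
     "\<And>i. Suc i < length es \<Longrightarrow> t (es ! i) = s (es ! Suc i)"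
    using assms(1) by (auto simp: is_path_def p)
  have B: "w \<in> V" "set fs \<subseteq> E" "fs \<noteq> [] \<Longrightarrow> s (hd fs) = w"
     "\<And>i. Suc i < length fs \<Longrightarrow> t (fs ! i) = s (fs ! Suc i)"
    using assms(2) by (auto simp: is_path_def p')
  have C: "pend t (v, es) = w" using assms(3) p p' by simp
  show "is_path V E s t (conc p p')"
    unfolding is_path_def conc_def p p' fst_conv snd_conv
  proof (intro conjI allI impI)
    show "v \<in> V" "set (es @ fs) \<subseteq> E" using A B by auto
    show "s (hd (es @ fs)) = v" if "es @ fs \<noteq> []"
      using A B C that by (cases "es = []") (auto simp: pend_def)
    fix i assume i: "Suc i < length (es @ fs)"
    consider "Suc i < length es" | "Suc i = length es" | "length es \<le> i" by linarith
    then show "t ((es @ fs) ! i) = s ((es @ fs) ! Suc i)"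
    proof cases
      case 1 then show ?thesis using A by (simp add: nth_append)
    next
      case 2
      then have "fs \<noteq> []" using i by auto
      moreover have "es ! i = last es" using 2 by (metis diff_Suc_1 last_conv_nth list.size(3) nat.simps(3))
      moreover have "es \<noteq> []" using 2 by auto
      ultimately show ?thesis using 2 B C by (auto simp: nth_append pend_def hd_conv_nth)
    next
      case 3
      then show ?thesis using B(4)[of "i - length es"] i by (simp add: nth_append Suc_diff_le)
    qed
  qed
  show "pend t (conc p p') = pend t p'"
    using C by (auto simp: pend_def conc_def p p')
qed

lemma is_path_take:
  assumes "is_path V E s t (v, es)"
  shows "is_path V E s t (v, take i es)"
  using assms by (auto simp: is_path_def dest: in_set_takeD)

lemma is_path_drop:
  assumes "is_path V E s t (v, es)" "s ` E \<subseteq> V" "t ` E \<subseteq> V"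
  shows "is_path V E s t (pend t (v, take i es), drop i es)"
proof -
  have A: "v \<in> V" "set es \<subseteq> E" "es \<noteq> [] \<Longrightarrow> s (hd es) = v"
     "\<And>i. Suc i < length es \<Longrightarrow> t (es ! i) = s (es ! Suc i)"
    using assms(1) by (auto simp: is_path_def)
  show ?thesis unfolding is_path_def fst_conv snd_conv
  proof (intro conjI allI impI)
    show "pend t (v, take i es) \<in> V"
    proof (cases "take i es = []")
      case False
      then have "last (take i es) \<in> E" using A(2) by (meson in_set_takeD last_in_set subsetD)
      then show ?thesis using False assms(3) by (auto simp: pend_def)
    qed (simp add: pend_def A)
    show "set (drop i es) \<subseteq> E" using A(2) by (meson in_set_dropD subsetI subsetD)
    show "s (hd (drop i es)) = pend t (v, take i es)" if "drop i es \<noteq> []"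
    proof (cases "i = 0")
      case True then show ?thesis using that A by (simp add: pend_def)
    next
      case False
      then have "i < length es" using that by simp
      moreover have "take i es \<noteq> []" using False \<open>i < length es\<close> by auto
      ultimately have "last (take i es) = es ! (i - 1)" "hd (drop i es) = es ! i"
        by (simp_all add: hd_drop_conv_nth last_conv_nth)
      moreover have "take i es \<noteq> []" using False \<open>i < length es\<close> by auto
      ultimately show ?thesis using A(4)[of "i - 1"] False \<open>i < length es\<close> by (simp add: pend_def)
    qed
    fix j assume "Suc j < length (drop i es)"
    then show "t (drop i es ! j) = s (drop i es ! Suc j)" using A(4)[of "i + j"] by simp
  qed
qed

lemma conc_take_drop: "conc (v, take i es) (w, drop i es) = (v, es)"
  by (simp add: conc_def)


locale qa =
  fixes V :: "'v set" and E :: "'e set" and s t :: "'e \<Rightarrow> 'v"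
    and I :: "(('v,'e) qpath \<Rightarrow> 'k::field) set"
    and \<pi> :: "(('v,'e) qpath \<Rightarrow> 'k) \<Rightarrow> 'a::ab_group_add"
    and sc :: "'k \<Rightarrow> 'a \<Rightarrow> 'a" and mul :: "'a \<Rightarrow> 'a \<Rightarrow> 'a"
    and Q :: "'a set"
  assumes quiv: "finite_connected_quiver V E s t"
    and ideal: "is_ideal V E s t I"
    and IR2: "I \<subseteq> arrow_ideal_sq V E s t"
    and qp: "quotient_presentation V E s t I \<pi> sc mul"
    and pb: "path_basis V E s t \<pi> sc Q"
    and acyc: "acyclic_wrt V E s t \<pi> Q"
begin

abbreviation "P \<equiv> path_alg V E s t"
abbreviation "isp \<equiv> is_path V E s t"
abbreviation "cl p \<equiv> \<pi> (pvec p)"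
abbreviation "ev v \<equiv> cl (v, [])"
abbreviation "ar r \<equiv> cl (s r, [r])"
abbreviation "pm \<equiv> pmult t"

lemma finV: "finite V" and finE: "finite E" and sE: "s ` E \<subseteq> V" and tE: "t ` E \<subseteq> V"
  and Vne: "V \<noteq> {}"
  using quiv by (auto simp: finite_connected_quiver_def)

lemma pend_in_V: "isp p \<Longrightarrow> pend t p \<in> V"
proof -
  assume "isp p"
  then show ?thesis using tE
    by (cases p) (auto simp: is_path_def pend_def dest!: last_in_set)
qed

lemma start_in_V: "isp p \<Longrightarrow> fst p \<in> V"
  by (auto simp: is_path_def)

lemma P_def': "x \<in> P \<longleftrightarrow> finite {p. x p \<noteq> 0} \<and> (\<forall>p. x p \<noteq> 0 \<longrightarrow> isp p)"
  by (simp add: path_alg_def)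

lemma zero_P[simp]: "0 \<in> P" by (simp add: P_def')

lemma add_P: "x \<in> P \<Longrightarrow> y \<in> P \<Longrightarrow> x + y \<in> P"
proof -
  assume a: "x \<in> P" "y \<in> P"
  have "{p. (x + y) p \<noteq> 0} \<subseteq> {p. x p \<noteq> 0} \<union> {p. y p \<noteq> 0}" by auto
  then show ?thesis using a unfolding P_def' by (auto intro: finite_subset)
qed

lemma diff_P: "x \<in> P \<Longrightarrow> y \<in> P \<Longrightarrow> x - y \<in> P"
proof -
  assume a: "x \<in> P" "y \<in> P"
  have "{p. (x - y) p \<noteq> 0} \<subseteq> {p. x p \<noteq> 0} \<union> {p. y p \<noteq> 0}" by auto
  then show ?thesis using a unfolding P_def' by (auto intro: finite_subset)
qed

lemma smulf_P: "x \<in> P \<Longrightarrow> smulf c x \<in> P"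
proof -
  assume a: "x \<in> P"
  have "{p. smulf c x p \<noteq> 0} \<subseteq> {p. x p \<noteq> 0}" by (auto simp: smulf_def)
  then show ?thesis using a unfolding P_def' by (auto intro: finite_subset simp: smulf_def)
qed

lemma pvec_P: "isp p \<Longrightarrow> pvec p \<in> P"
  by (auto simp: P_def' pvec_def)

lemma pm_P: assumes "x \<in> P" "y \<in> P" shows "pm x y \<in> P"
proof -
  let ?S = "(\<lambda>(p, q). conc p q) ` ({p. x p \<noteq> 0} \<times> {p. y p \<noteq> 0})"
  have fin: "finite ?S" using assms by (auto simp: P_def')
  have *: "(\<exists>p q. x p \<noteq> 0 \<and> y q \<noteq> 0 \<and> pend t p = fst q \<and> r = conc p q)" if "pm x y r \<noteq> 0" for r
  proof -
    obtain v es where r: "r = (v, es)" by (cases r)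
    from that obtain i where "i \<le> length es" "x (v, take i es) * y (pend t (v, take i es), drop i es) \<noteq> 0"
      unfolding r pmult_apply by (meson sum.not_neutral_contains_not_neutral atMost_iff)
    then show ?thesis by (intro exI[of _ "(v, take i es)"] exI[of _ "(pend t (v, take i es), drop i es)"])
        (auto simp: r conc_def)
  qed
  have "{r. pm x y r \<noteq> 0} \<subseteq> ?S" using * by fastforce
  moreover have "isp r" if "pm x y r \<noteq> 0" for r
    using *[OF that] assms is_path_conc(1) by (fastforce simp: P_def')
  ultimately show ?thesis using fin by (auto simp: P_def' intro: finite_subset)
qed

lemma P_induct[consumes 1, case_names zero step]:
  assumes "x \<in> P" and "\<Phi> 0"
    and step: "\<And>x c p. x \<in> P \<Longrightarrow> \<Phi> x \<Longrightarrow> isp p \<Longrightarrow> \<Phi> (x + smulf c (pvec p))"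
  shows "\<Phi> x"
proof -
  have "x \<in> P \<Longrightarrow> card {p. x p \<noteq> 0} = n \<Longrightarrow> \<Phi> x" for n x
  proof (induction n arbitrary: x)
    case 0
    then have "x = 0" by (auto simp: P_def')
    then show ?case using assms(2) by (simp add: zero_fun_def)
  next
    case (Suc n)
    then obtain p where p: "x p \<noteq> 0" by (metis (mono_tags, lifting) card.empty empty_Collect_eq nat.distinct(1))
    define x' where "x' = x(p := 0)"
    have fin: "finite {p. x p \<noteq> 0}" using Suc.prems by (simp add: P_def')
    have "{q. x' q \<noteq> 0} = {q. x q \<noteq> 0} - {p}" by (auto simp: x'_def)
    then have c: "card {q. x' q \<noteq> 0} = n" using Suc.prems p fin by simp
    have x'P: "x' \<in> P" using Suc.prems by (auto simp: P_def' x'_def intro: finite_subset[OF _ fin])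
    have ispp: "isp p" using Suc.prems p unfolding P_def' by blast
    have "x = x' + smulf (x p) (pvec p)" by (auto simp: x'_def smulf_def pvec_def)
    then show ?case using step[OF x'P Suc.IH[OF x'P c] ispp, of "x p"] by simp
  qed
  then show ?thesis using assms(1) by blast
qed

lemma pi_add: "x \<in> P \<Longrightarrow> y \<in> P \<Longrightarrow> \<pi> (x + y) = \<pi> x + \<pi> y"
  and pi_mult: "x \<in> P \<Longrightarrow> y \<in> P \<Longrightarrow> \<pi> (pm x y) = mul (\<pi> x) (\<pi> y)"
  and pi_smul: "x \<in> P \<Longrightarrow> \<pi> (smulf c x) = sc c (\<pi> x)"
  and pi_surj: "\<exists>x\<in>P. a = \<pi> x"
  and pi_ker: "x \<in> P \<Longrightarrow> \<pi> x = 0 \<longleftrightarrow> x \<in> I"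
  using qp unfolding quotient_presentation_def smulf_def by (auto simp: image_iff)

lemma I_P: "I \<subseteq> P" and zero_I: "0 \<in> I"
  using ideal by (auto simp: is_ideal_def)

lemma pi_zero[simp]: "\<pi> 0 = 0" using pi_ker zero_I zero_P by blast

lemma pi_diff: "x \<in> P \<Longrightarrow> y \<in> P \<Longrightarrow> \<pi> (x - y) = \<pi> x - \<pi> y"
  by (metis diff_P diff_add_cancel eq_diff_eq pi_add)

lemma sum_P: "(\<And>i. i \<in> S \<Longrightarrow> f i \<in> P) \<Longrightarrow> sum f S \<in> P"
  by (induction S rule: infinite_finite_induct) (auto intro: add_P)

lemma pi_sum: "(\<And>i. i \<in> S \<Longrightarrow> f i \<in> P) \<Longrightarrow> \<pi> (sum f S) = (\<Sum>i\<in>S. \<pi> (f i))"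
proof (induction S rule: infinite_finite_induct)
  case (insert a S)
  have "sum f S \<in> P" using insert by (intro sum_P) auto
  have "f a \<in> P" using insert by simp
  have "\<pi> (sum f (insert a S)) = \<pi> (f a + sum f S)" by (rule arg_cong[where f=\<pi>]) (simp add: insert.hyps)
  also have "\<dots> = \<pi> (f a) + \<pi> (sum f S)" by (rule pi_add) fact+
  also have "\<dots> = \<pi> (f a) + (\<Sum>i\<in>S. \<pi> (f i))" using insert.IH insert.prems by (metis insert_iff)
  also have "\<dots> = (\<Sum>i\<in>insert a S. \<pi> (f i))" using insert.hyps by simp
  finally show ?case .
qed simp_all

lemma vs: "vector_space sc"
proof (unfold vector_space_def, intro conjI allI)
  fix a b :: 'k and x y :: 'a
  obtain x0 where x0: "x0 \<in> P" "x = \<pi> x0" using pi_surj by blast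
  obtain y0 where y0: "y0 \<in> P" "y = \<pi> y0" using pi_surj by blast
  show "sc a (x + y) = sc a x + sc a y"
    using x0 y0 by (simp add: pi_add[symmetric] pi_smul[symmetric] add_P smulf_P)
      (simp add: smulf_def distrib_left plus_fun_def)
  show "sc (a + b) x = sc a x + sc b x"
    using x0 by (simp add: pi_add[symmetric] pi_smul[symmetric] add_P smulf_P)
      (simp add: smulf_def distrib_right plus_fun_def)
  show "sc a (sc b x) = sc (a * b) x"
    using x0 by (simp add: pi_smul[symmetric] smulf_P) (simp add: smulf_def mult.assoc)
  show "sc 1 x = x"
    using x0 by (simp add: pi_smul[symmetric] smulf_P) (simp add: smulf_def)
qed

sublocale A: vector_space sc by (rule vs)

lemma mul_add_left: "mul (a + b) c = mul a c + mul b c"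
  and mul_add_right: "mul c (a + b) = mul c a + mul c b"
  and mul_sc_left: "mul (sc k a) b = sc k (mul a b)"
  and mul_sc_right: "mul a (sc k b) = sc k (mul a b)"
  and mul_assoc: "mul (mul a b) c = mul a (mul b c)"
proof -
  obtain a0 where a0: "a0 \<in> P" "a = \<pi> a0" using pi_surj by blast
  obtain b0 where b0: "b0 \<in> P" "b = \<pi> b0" using pi_surj by blast
  obtain c0 where c0: "c0 \<in> P" "c = \<pi> c0" using pi_surj by blast
  show "mul (a + b) c = mul a c + mul b c"
    using a0 b0 c0 by (simp add: pi_add[symmetric] pi_mult[symmetric] add_P pm_P pmult_add_left)
  show "mul c (a + b) = mul c a + mul c b"
    using a0 b0 c0 by (simp add: pi_add[symmetric] pi_mult[symmetric] add_P pm_P pmult_add_right)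
  show "mul (sc k a) b = sc k (mul a b)"
    using a0 b0 by (simp add: pi_smul[symmetric] pi_mult[symmetric] smulf_P pm_P pmult_smulf_left)
  show "mul a (sc k b) = sc k (mul a b)"
    using a0 b0 by (simp add: pi_smul[symmetric] pi_mult[symmetric] smulf_P pm_P pmult_smulf_right)
  show "mul (mul a b) c = mul a (mul b c)"
    using a0 b0 c0 by (simp add: pi_mult[symmetric] pm_P pmult_assoc)
qed

lemma mul_zero_left[simp]: "mul 0 a = 0"
  by (metis add_cancel_right_right mul_add_left)
lemma mul_zero_right[simp]: "mul a 0 = 0"
  by (metis add_cancel_right_right mul_add_right)
lemma mul_diff_left: "mul (a - b) c = mul a c - mul b c"
  by (metis diff_add_cancel eq_diff_eq mul_add_left)
lemma mul_diff_right: "mul c (a - b) = mul c a - mul c b"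
  by (metis diff_add_cancel eq_diff_eq mul_add_right)
lemma mul_minus_left: "mul (- a) c = - mul a c"
  by (metis diff_0 mul_diff_left mul_zero_left)
lemma mul_minus_right: "mul c (- a) = - mul c a"
  by (metis diff_0 mul_diff_right mul_zero_right)
lemma mul_sum_left: "mul (sum f S) c = (\<Sum>i\<in>S. mul (f i) c)"
  by (induction S rule: infinite_finite_induct) (auto simp: mul_add_left)
lemma mul_sum_right: "mul c (sum f S) = (\<Sum>i\<in>S. mul c (f i))"
  by (induction S rule: infinite_finite_induct) (auto simp: mul_add_right)

lemma cl_mult: "isp p \<Longrightarrow> isp p' \<Longrightarrow>
   mul (cl p) (cl p') = (if pend t p = fst p' then cl (conc p p') else 0)"
  by (simp add: pi_mult[symmetric] pvec_P pvec_mult)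

lemma conc_vertex_left: "conc (fst p, []) p = p" by (cases p) (simp add: conc_def)
lemma conc_vertex_right: "conc p (w, []) = p" by (cases p) (simp add: conc_def)

lemma ev_cl: "isp p \<Longrightarrow> v \<in> V \<Longrightarrow> mul (ev v) (cl p) = (if v = fst p then cl p else 0)"
  using cl_mult[of "(v,[])" p] by (auto simp: is_path_def conc_vertex_left pend_def)

lemma cl_ev: "isp p \<Longrightarrow> v \<in> V \<Longrightarrow> mul (cl p) (ev v) = (if pend t p = v then cl p else 0)"
  using cl_mult[of p "(v,[])"] by (auto simp: is_path_def conc_vertex_right)

lemma isp_vertex: "v \<in> V \<Longrightarrow> isp (v, [])" by (simp add: is_path_def)

lemma isp_arrow: "r \<in> E \<Longrightarrow> isp (s r, [r])" using sE by (auto simp: is_path_def)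

lemma ev_ev: "v \<in> V \<Longrightarrow> w \<in> V \<Longrightarrow> mul (ev v) (ev w) = (if v = w then ev v else 0)"
  using ev_cl[of "(w,[])" v] isp_vertex by auto

lemma span_cl: "A.span {cl p | p. isp p} = UNIV"
proof -
  have H: "\<pi> x \<in> A.span {cl p | p. isp p}" if "x \<in> P" for x
    using that
  proof (induction rule: P_induct)
    case zero show ?case by (simp only: pi_zero A.span_zero)
  next
    case (step x c p)
    then have eq: "\<pi> (x + smulf c (pvec p)) = \<pi> x + sc c (cl p)"
      by (simp add: pi_add pi_smul smulf_P pvec_P)
    have h1: "sc c (cl p) \<in> A.span {cl p | p. isp p}"
    proof (rule A.span_scale, rule A.span_base)
      show "cl p \<in> {cl p | p. isp p}" using step(2) by blast
    qed
    have h2: "\<pi> x \<in> A.span {cl p | p. isp p}" using step(3) .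
    have "\<pi> (x + smulf c (pvec p)) \<in> A.span {cl p | p. isp p}"
      unfolding eq by (rule A.span_add[OF h2 h1])
    then show ?case .
  qed
  have "a \<in> A.span {cl p | p. isp p}" for a
  proof -
    obtain x where "x \<in> P" "a = \<pi> x" using pi_surj by blast
    then show "a \<in> A.span {cl p | p. isp p}" using H by blast
  qed
  then show ?thesis by blast
qed

end


context qa begin

lemma Q_indep: "A.independent Q" and Q_span: "A.span Q = UNIV"
  and Q_cl: "q \<in> Q \<Longrightarrow> \<exists>p. isp p \<and> q = cl p"
  and ev_Q: "v \<in> V \<Longrightarrow> ev v \<in> Q" and ar_Q: "r \<in> E \<Longrightarrow> ar r \<in> Q"
  using pb by (auto simp: path_basis_def)

lemma Q_nz: "q \<in> Q \<Longrightarrow> q \<noteq> 0"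
  using Q_indep A.dependent_zero by blast

lemma ev_left: "isp p \<Longrightarrow> mul (ev (fst p)) (cl p) = cl p"
  using ev_cl start_in_V by auto

lemma ev_right: "isp p \<Longrightarrow> mul (cl p) (ev (pend t p)) = cl p"
  using cl_ev pend_in_V by auto

lemma well_defined:
  assumes "isp p" "isp p'" "cl p = cl p'" "cl p \<noteq> 0"
  shows "fst p = fst p'" "pend t p = pend t p'"
proof -
  show "fst p = fst p'"
  proof (rule ccontr)
    assume "fst p \<noteq> fst p'"
    then have "mul (ev (fst p)) (cl p') = 0" using ev_cl[OF assms(2) start_in_V[OF assms(1)]] by simp
    then show False using ev_left[OF assms(1)] assms by simp
  qed
  show "pend t p = pend t p'"
  proof (rule ccontr)
    assume "pend t p \<noteq> pend t p'"
    then have "mul (cl p') (ev (pend t p)) = 0" using cl_ev[OF assms(2) pend_in_V[OF assms(1)]] by simp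
    then show False using ev_right[OF assms(1)] assms by simp
  qed
qed

lemma qstart_qend:
  assumes "q \<in> Q" "isp p" "q = cl p"
  shows "qstart V E s t \<pi> q = fst p" "qend V E s t \<pi> q = pend t p"
proof -
  define p' where "p' = (SOME p. isp p \<and> \<pi> (pvec p) = q)"
  have "isp p \<and> \<pi> (pvec p) = q" using assms(2,3) by simp
  then have H: "isp p' \<and> \<pi> (pvec p') = q" unfolding p'_def by (rule someI)
  have nz: "cl p \<noteq> 0" using Q_nz assms(1,3) by blast
  have eq: "cl p = cl p'" using H assms(3) by simp
  have "fst p = fst p'" "pend t p = pend t p'"
    using well_defined[OF assms(2) conjunct1[OF H] eq nz] by auto
  then show "qstart V E s t \<pi> q = fst p" "qend V E s t \<pi> q = pend t p"
    unfolding qstart_def qend_def pstart_def p'_def[symmetric] by simp_all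
qed

abbreviation "qs q \<equiv> qstart V E s t \<pi> q"
abbreviation "qe q \<equiv> qend V E s t \<pi> q"

lemma qs_V: "q \<in> Q \<Longrightarrow> qs q \<in> V" and qe_V: "q \<in> Q \<Longrightarrow> qe q \<in> V"
proof -
  assume qQ: "q \<in> Q"
  then obtain p where p: "isp p" "q = cl p" using Q_cl by blast
  show "qs q \<in> V" using qstart_qend(1)[OF qQ p] start_in_V[OF p(1)] by simp
  show "qe q \<in> V" using qstart_qend(2)[OF qQ p] pend_in_V[OF p(1)] by simp
qed

lemma ev_q: "q \<in> Q \<Longrightarrow> v \<in> V \<Longrightarrow> mul (ev v) q = (if qs q = v then q else 0)"
proof -
  assume qQ: "q \<in> Q" and vV: "v \<in> V"
  then obtain p where p: "isp p" "q = cl p" using Q_cl by blast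
  show ?thesis using ev_cl[OF p(1) vV] qstart_qend(1)[OF qQ p] p(2) by auto
qed

lemma q_ev: "q \<in> Q \<Longrightarrow> v \<in> V \<Longrightarrow> mul q (ev v) = (if qe q = v then q else 0)"
proof -
  assume qQ: "q \<in> Q" and vV: "v \<in> V"
  then obtain p where p: "isp p" "q = cl p" using Q_cl by blast
  show ?thesis using cl_ev[OF p(1) vV] qstart_qend(2)[OF qQ p] p(2) by auto
qed

lemma qs_ev: "v \<in> V \<Longrightarrow> qs (ev v) = v" and qe_ev: "v \<in> V \<Longrightarrow> qe (ev v) = v"
  using qstart_qend[OF ev_Q isp_vertex] by (auto simp: pend_def)

lemma qs_ar: "r \<in> E \<Longrightarrow> qs (ar r) = s r" and qe_ar: "r \<in> E \<Longrightarrow> qe (ar r) = t r"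
  using qstart_qend[OF ar_Q isp_arrow] by (auto simp: pend_def)

lemma ev_inj: "v \<in> V \<Longrightarrow> w \<in> V \<Longrightarrow> ev v = ev w \<Longrightarrow> v = w"
  by (metis qs_ev)

subsection \<open>Elements of I vanish on trivial paths\<close>

definition "J1 = {x \<in> P. \<forall>v. x (v, []) = 0}"

lemma J1_ideal: "is_ideal V E s t J1"
proof -
  have m: "pm y x \<in> J1 \<and> pm x y \<in> J1" if "x \<in> J1" "y \<in> P" for x y
    using that by (auto simp: J1_def pmult_apply pm_P)
  have a: "x + y \<in> J1" if "x \<in> J1" "y \<in> J1" for x y
    using that by (auto simp: J1_def intro: add_P)
  have c: "(\<lambda>p. c * x p) \<in> J1" if "x \<in> J1" for x c
    using that smulf_P[of x c] by (auto simp: smulf_def J1_def)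
  have z: "J1 \<subseteq> P" "0 \<in> J1" by (auto simp: J1_def)
  have a1: "\<forall>x\<in>J1. \<forall>y\<in>J1. x + y \<in> J1" using a by blast
  have c1: "\<forall>c. \<forall>x\<in>J1. (\<lambda>p. c * x p) \<in> J1" using c by blast
  have m1: "\<forall>x\<in>P. \<forall>y\<in>J1. pm x y \<in> J1 \<and> pm y x \<in> J1" using m by blast
  show ?thesis unfolding is_ideal_def
    by (intro conjI) (rule z(1), rule z(2), rule a1, rule c1, rule m1)
qed

lemma arrow_ideal_J1: "arrow_ideal V E s t \<subseteq> J1"
proof -
  have "{pvec (s e, [e]) | e. e \<in> E} \<subseteq> J1"
  proof
    fix x assume "x \<in> {pvec (s e, [e]) | e. e \<in> E}"
    then obtain e where e: "e \<in> E" "x = pvec (s e, [e])" by blast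
    then have "x \<in> P" using pvec_P isp_arrow by blast
    moreover have "\<forall>v. x (v, []) = 0" using e by (simp add: pvec_def)
    ultimately show "x \<in> J1" by (simp add: J1_def)
  qed
  then show ?thesis using J1_ideal unfolding arrow_ideal_def gen_ideal_def by blast
qed

lemma I_J1: "I \<subseteq> J1"
proof -
  have "{pm a b | a b. a \<in> arrow_ideal V E s t \<and> b \<in> arrow_ideal V E s t} \<subseteq> J1"
    using arrow_ideal_J1 J1_ideal J1_def unfolding is_ideal_def by blast
  then have "arrow_ideal_sq V E s t \<subseteq> J1"
    using J1_ideal unfolding arrow_ideal_sq_def gen_ideal_def by blast
  then show ?thesis using IR2 by blast
qed

lemma I_triv: "x \<in> I \<Longrightarrow> x (v, []) = 0"
  using I_J1 by (auto simp: J1_def)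

subsection \<open>Cycles vanish\<close>

lemma cycle_vanish:
  assumes c: "isp c" "snd c \<noteq> []" "pend t c = fst c"
  shows "cl c = 0"
proof -
  define v where "v = fst c"
  have vV: "v \<in> V" using c start_in_V v_def by blast
  have "cl c \<in> A.span Q" using Q_span by simp
  then obtain T r where T: "finite T" "T \<subseteq> Q" "cl c = (\<Sum>q\<in>T. sc (r q) q)"
    unfolding A.span_explicit by blast
  have "cl c = mul (ev v) (mul (cl c) (ev v))"
    using ev_left[OF c(1)] ev_right[OF c(1)] c(3) v_def mul_assoc by metis
  also have "\<dots> = (\<Sum>q\<in>T. sc (r q) (mul (ev v) (mul q (ev v))))"
    unfolding T(3) by (simp add: mul_sum_left mul_sum_right mul_sc_left mul_sc_right)
  also have "\<dots> = (\<Sum>q\<in>T. if q = ev v then sc (r q) q else 0)"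
  proof (rule sum.cong[OF refl])
    fix q assume qT: "q \<in> T"
    then have qQ: "q \<in> Q" using T by blast
    have "mul (ev v) (mul q (ev v)) = (if qs q = v \<and> qe q = v then q else 0)"
      using ev_q[OF qQ vV] q_ev[OF qQ vV] by auto
    also have "\<dots> = (if q = ev v then q else 0)"
    proof (cases "qs q = v \<and> qe q = v")
      case True
      then obtain u where "u \<in> V" "q = ev u" using acyc qQ unfolding acyclic_wrt_def by metis
      then show ?thesis using True qs_ev by auto
    next
      case False
      then show ?thesis using qs_ev qe_ev vV by auto
    qed
    finally show "sc (r q) (mul (ev v) (mul q (ev v))) = (if q = ev v then sc (r q) q else 0)"
      by simp
  qed
  also have "\<dots> = sc (if ev v \<in> T then r (ev v) else 0) (ev v)"
    using T(1) by (simp add: sum.delta')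
  finally have cc: "cl c = sc (if ev v \<in> T then r (ev v) else 0) (ev v)" .
  define lam where "lam = (if ev v \<in> T then r (ev v) else 0)"
  have xP: "pvec c - smulf lam (pvec (v, [])) \<in> P"
    using c vV by (intro diff_P smulf_P pvec_P isp_vertex) auto
  have "\<pi> (pvec c - smulf lam (pvec (v, []))) = 0"
    using c vV cc by (simp add: pi_diff pvec_P smulf_P isp_vertex pi_smul lam_def)
  then have "pvec c - smulf lam (pvec (v, [])) \<in> I" using pi_ker xP by blast
  then have "(pvec c - smulf lam (pvec (v, []))) (v, []) = 0" by (rule I_triv)
  moreover have "(v, []) \<noteq> c" using c(2) by auto
  moreover have "pvec c (v, []) = 0" using c(2) by (auto simp: pvec_def)
  ultimately have "lam = 0" by (simp add: smulf_def pvec_def)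
  then show ?thesis using cc lam_def by simp
qed

subsection \<open>Long paths vanish\<close>

lemma long_vanish:
  assumes p: "isp p" "card V \<le> length (snd p)"
  shows "cl p = 0"
proof -
  obtain v es where pe: "p = (v, es)" by (cases p)
  let ?n = "length es"
  define vt where "vt i = pend t (v, take i es)" for i
  have vtV: "vt ` {..?n} \<subseteq> V"
  proof
    fix x assume "x \<in> vt ` {..?n}"
    then obtain i where "x = vt i" by blast
    moreover have "isp (v, take i es)" using p pe is_path_take[of V E s t v es i] by simp
    ultimately show "x \<in> V" using pend_in_V by (simp add: vt_def)
  qed
  have "card (vt ` {..?n}) \<le> card V" using vtV finV card_mono by blast
  then have "card (vt ` {..?n}) < card {..?n}" using p pe by simp
  then have "\<not> inj_on vt {..?n}" using pigeonhole by blast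
  then obtain i j where ij: "i < j" "j \<le> ?n" "vt i = vt j"
    unfolding inj_on_def by (metis atMost_iff linorder_neqE_nat)
  define c where "c = (vt i, take (j - i) (drop i es))"
  define p1 where "p1 = (v, take i es)"
  define p2 where "p2 = (vt j, drop j es)"
  have isp_es: "isp (v, es)" using p pe by simp
  have ic: "isp c" unfolding c_def vt_def
    using is_path_take is_path_drop[OF isp_es sE tE] by (metis prod.collapse)
  have ip1: "isp p1" unfolding p1_def by (rule is_path_take[OF isp_es])
  have ip2: "isp p2" unfolding p2_def vt_def using is_path_drop[OF isp_es sE tE] .
  have pendc: "pend t c = vt j"
    unfolding c_def vt_def using pend_take_drop[of i "j - i" es t v] ij by simp
  have "snd c \<noteq> []" using ij by (simp add: c_def)
  then have c0: "cl c = 0" using cycle_vanish[OF ic] pendc ij by (simp add: c_def)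
  have e1: "conc p1 c = (v, take j es)"
    using ij by (simp add: conc_def p1_def c_def take_add[symmetric])
  have e2: "conc (v, take j es) p2 = (v, es)" by (simp add: conc_def p2_def)
  have ipj: "isp (v, take j es)" by (rule is_path_take[OF isp_es])
  have "cl (v, take j es) = mul (cl p1) (cl c)"
    using cl_mult[OF ip1 ic] e1 by (simp add: p1_def c_def vt_def)
  then have "cl (v, take j es) = 0" using c0 by simp
  moreover have "cl (v, es) = mul (cl (v, take j es)) (cl p2)"
    using cl_mult[OF ipj ip2] e2 by (simp add: p2_def vt_def)
  ultimately show ?thesis using pe by simp
qed

subsection \<open>Finite dimensionality\<close>

definition "Gfin = cl ` {p. isp p \<and> length (snd p) < card V}"

lemma Gfin_finite: "finite Gfin"
proof -
  have "{p. isp p \<and> length (snd p) < card V} \<subseteq> V \<times> {es. set es \<subseteq> E \<and> length es \<le> card V}"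
    by (auto simp: is_path_def)
  moreover have "finite (V \<times> {es. set es \<subseteq> E \<and> length es \<le> card V})"
    using finV finE finite_lists_length_le by blast
  ultimately have "finite {p. isp p \<and> length (snd p) < card V}" by (rule finite_subset)
  then show ?thesis unfolding Gfin_def by (rule finite_imageI)
qed

lemma Gfin_span: "A.span Gfin = UNIV"
proof -
  have "{cl p | p. isp p} \<subseteq> A.span Gfin"
  proof
    fix a assume "a \<in> {cl p | p. isp p}"
    then obtain p where p: "isp p" "a = cl p" by blast
    show "a \<in> A.span Gfin"
    proof (cases "length (snd p) < card V")
      case True then show ?thesis using p by (intro A.span_base) (auto simp: Gfin_def)
    next
      case False
      then have "a = 0" using p long_vanish by simp
      then show ?thesis by (simp only: A.span_zero)
    qed
  qed
  then have "A.span {cl p | p. isp p} \<subseteq> A.span Gfin" by (rule A.span_minimal) simp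
  then show ?thesis unfolding span_cl by blast
qed

lemma Q_finite: "finite Q"
proof -
  have "Q \<subseteq> A.span Gfin" unfolding Gfin_span by simp
  then show ?thesis using A.independent_span_bound[OF Gfin_finite Q_indep] by simp
qed

end


section \<open>Generic linear algebra\<close>

context vector_space begin

lemma indep_disjoint_span_Int:
  assumes B: "independent B" and B1: "B1 \<subseteq> B" and B2: "B2 \<subseteq> B" and dj: "B1 \<inter> B2 = {}"
    and x1: "x \<in> span B1" and x2: "x \<in> span B2"
  shows "x = 0"
proof -
  have r1: "representation B x = representation B1 x" by (rule representation_extend[OF B x1 B1])
  have r2: "representation B x = representation B2 x" by (rule representation_extend[OF B x2 B2])
  have z: "representation B x b = 0" for b
  proof (rule ccontr)
    assume "representation B x b \<noteq> 0"
    then have "b \<in> B1" "b \<in> B2" using r1 r2 representation_ne_zero by metis+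
    then show False using dj by blast
  qed
  have xB: "x \<in> span B" using span_mono[OF B1] x1 by blast
  have "x = (\<Sum>b | representation B x b \<noteq> 0. representation B x b *s b)"
    using sum_nonzero_representation_eq[OF B xB] by simp
  also have "\<dots> = 0" using z by simp
  finally show ?thesis .
qed

lemma dim_direct_sum:
  assumes C: "subspace C" and W: "subspace W" and CW: "C \<inter> W \<subseteq> {0}"
    and U: "U = {c + w | c w. c \<in> C \<and> w \<in> W}" and F: "finite F" "U \<subseteq> span F"
  shows "dim U = dim C + dim W"
proof -
  obtain BC where BC: "BC \<subseteq> C" "independent BC" "C \<subseteq> span BC" "card BC = dim C"
    using basis_exists by blast
  obtain BW where BW: "BW \<subseteq> W" "independent BW" "W \<subseteq> span BW" "card BW = dim W"
    using basis_exists by blast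
  have CU: "C \<subseteq> U" unfolding U using subspace_0[OF W] by force
  have WU: "W \<subseteq> U" unfolding U using subspace_0[OF C] by force
  have fBC: "finite BC" using independent_span_bound[OF F(1) BC(2)] BC(1) CU F(2) by blast
  have fBW: "finite BW" using independent_span_bound[OF F(1) BW(2)] BW(1) WU F(2) by blast
  have spC: "span BC \<subseteq> C" using span_minimal[OF BC(1) C] .
  have spW: "span BW \<subseteq> W" using span_minimal[OF BW(1) W] .
  have dj: "BC \<inter> BW = {}"
  proof (rule ccontr)
    assume "BC \<inter> BW \<noteq> {}"
    then obtain b where "b \<in> BC" "b \<in> BW" by blast
    then have "b = 0" using BC(1) BW(1) CW by blast
    then show False using \<open>b \<in> BC\<close> BC(2) dependent_zero by blast
  qed
  have ind: "independent (BC \<union> BW)"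
    unfolding independent_explicit_module
  proof (intro allI impI)
    fix T u v assume T: "finite T" "T \<subseteq> BC \<union> BW" and s0: "(\<Sum>v\<in>T. u v *s v) = 0" and vT: "v \<in> T"
    define T1 where "T1 = T \<inter> BC"
    define T2 where "T2 = T - BC"
    have T12: "T = T1 \<union> T2" "T1 \<inter> T2 = {}" "T2 \<subseteq> BW" "T1 \<subseteq> BC" using T by (auto simp: T1_def T2_def)
    have fT: "finite T1" "finite T2" using T(1) T12 by auto
    define x1 where "x1 = (\<Sum>v\<in>T1. u v *s v)"
    define x2 where "x2 = (\<Sum>v\<in>T2. u v *s v)"
    have "x1 + x2 = 0" using s0 T12 fT unfolding x1_def x2_def by (simp add: sum.union_disjoint)
    moreover have "x1 \<in> C" unfolding x1_def using spC T12
      by (intro subsetD[OF spC] span_sum span_scale span_base) blast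
    moreover have "x2 \<in> W" unfolding x2_def using spW T12
      by (intro subsetD[OF spW] span_sum span_scale span_base) blast
    ultimately have "x1 = - x2" "x1 \<in> C" "x2 \<in> W" by (auto simp: add_eq_0_iff)
    then have "x1 \<in> W" using subspace_neg[OF W] by simp
    then have "x1 = 0" using \<open>x1 \<in> C\<close> CW by blast
    then have x2: "x2 = 0" using \<open>x1 + x2 = 0\<close> by simp
    show "u v = 0"
    proof (cases "v \<in> T1")
      case True
      show ?thesis using independentD[OF BC(2) fT(1) T12(4)] \<open>x1 = 0\<close> True unfolding x1_def by blast
    next
      case False
      then have "v \<in> T2" using vT T12 by blast
      show ?thesis using independentD[OF BW(2) fT(2) T12(3)] x2 \<open>v \<in> T2\<close> unfolding x2_def by blast
    qed
  qed
  have sub: "BC \<union> BW \<subseteq> U" using BC(1) BW(1) CU WU by blast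
  have spn: "U \<subseteq> span (BC \<union> BW)"
  proof
    fix u assume "u \<in> U"
    then obtain c w where cw: "u = c + w" "c \<in> C" "w \<in> W" unfolding U by blast
    have "c \<in> span (BC \<union> BW)" using cw(2) BC(3) span_mono[of BC "BC \<union> BW"] by blast
    moreover have "w \<in> span (BC \<union> BW)" using cw(3) BW(3) span_mono[of BW "BC \<union> BW"] by blast
    ultimately show "u \<in> span (BC \<union> BW)" using cw(1) span_add by simp
  qed
  have "dim U = card (BC \<union> BW)" using basis_card_eq_dim[OF sub spn ind] by simp
  also have "\<dots> = card BC + card BW" using card_Un_disjoint[OF fBC fBW dj] .
  finally show ?thesis using BC(4) BW(4) by simp
qed

lemma exists_complement:
  assumes K: "subspace K" and N: "subspace N" and KN: "K \<subseteq> N"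
  obtains C0 where "subspace C0" "C0 \<subseteq> N" "C0 \<inter> K \<subseteq> {0}"
    "N = {c + k | c k. c \<in> C0 \<and> k \<in> K}"
proof -
  obtain BK where BK: "BK \<subseteq> K" "independent BK" "K \<subseteq> span BK" "card BK = dim K"
    using basis_exists by blast
  obtain BN where BN: "BK \<subseteq> BN" "BN \<subseteq> N" "independent BN" "N \<subseteq> span BN"
    using maximal_independent_subset_extend[of BK N] BK(1,2) KN by blast
  define C0 where "C0 = span (BN - BK)"
  have "subspace C0" unfolding C0_def by simp
  moreover have "C0 \<subseteq> N" unfolding C0_def using span_minimal[of "BN - BK" N] BN(2) N by blast
  moreover have "C0 \<inter> K \<subseteq> {0}"
  proof
    fix x assume "x \<in> C0 \<inter> K"
    then have "x \<in> span (BN - BK)" "x \<in> span BK" using BK(3) C0_def by auto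
    then have "x = 0" using indep_disjoint_span_Int[OF BN(3), of "BN - BK" BK] BN(1) by blast
    then show "x \<in> {0}" by simp
  qed
  moreover have "N = {c + k | c k. c \<in> C0 \<and> k \<in> K}"
  proof
    show "N \<subseteq> {c + k | c k. c \<in> C0 \<and> k \<in> K}"
    proof
      fix n assume "n \<in> N"
      then have "n \<in> span ((BN - BK) \<union> BK)" using BN(1,4) by (metis Diff_partition sup_commute subsetD)
      then obtain c k where "n = c + k" "c \<in> span (BN - BK)" "k \<in> span BK"
        unfolding span_Un by blast
      moreover have "span BK \<subseteq> K" using span_minimal[OF BK(1) K] .
      ultimately show "n \<in> {c + k | c k. c \<in> C0 \<and> k \<in> K}" unfolding C0_def by blast
    qed
    show "{c + k | c k. c \<in> C0 \<and> k \<in> K} \<subseteq> N"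
      using \<open>C0 \<subseteq> N\<close> KN subspace_add[OF N] by blast
  qed
  ultimately show ?thesis using that by blast
qed

end

lemma dim_image_inj:
  assumes f: "Vector_Spaces.linear s1 s2 f" and S: "module.subspace s1 S" and inj: "inj_on f S"
  shows "vector_space.dim s2 (f ` S) = vector_space.dim s1 S"
proof -
  interpret lf: Vector_Spaces.linear s1 s2 f by (rule f)
  obtain B where B: "B \<subseteq> S" "lf.vs1.independent B" "S \<subseteq> lf.vs1.span B" "card B = lf.vs1.dim S"
    using lf.vs1.basis_exists by blast
  have spB: "lf.vs1.span B \<subseteq> S" using lf.vs1.span_minimal[OF B(1) S] .
  have injB: "inj_on f (lf.vs1.span B)" using inj_on_subset[OF inj spB] .
  have ind: "lf.vs2.independent (f ` B)" using lf.independent_injective_image[OF B(2) injB] .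
  have sub: "f ` B \<subseteq> f ` S" using B(1) by blast
  have spn: "f ` S \<subseteq> lf.vs2.span (f ` B)" using lf.spans_image[OF B(3)] .
  have "card (f ` B) = card B" using card_image inj_on_subset[OF inj B(1)] by blast
  then show ?thesis using lf.vs2.basis_card_eq_dim[OF sub spn ind] B(4) by simp
qed

lemma vs_fscale: "vector_space sc \<Longrightarrow> vector_space (fscale sc :: 'k::field \<Rightarrow> ('b \<Rightarrow> 'a::ab_group_add) \<Rightarrow> _)"
  unfolding vector_space_def fscale_def by (auto simp: fun_eq_iff)


context qa begin

sublocale FA: vector_space "fscale sc :: 'k \<Rightarrow> ('a \<Rightarrow> 'a) \<Rightarrow> 'a \<Rightarrow> 'a"
  by (rule vs_fscale[OF vs])

definition "one = (\<Sum>v\<in>V. ev v)"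
definition "ad a = (\<lambda>x. mul a x - mul x a)"
abbreviation "Der \<equiv> derivations sc mul"
abbreviation "Inn \<equiv> inner_derivations mul"
definition "Nd = {d \<in> Der. \<forall>v\<in>V. d (ev v) = 0}"

lemma fscale_apply: "fscale sc c f x = sc c (f x)" by (simp add: fscale_def)

lemma subspace_Collect_eq:
  assumes lf: "\<And>a b. f (a + b) = f a + f b" "\<And>c a. f (sc c a) = sc c (f a)"
    and lg: "\<And>a b. g (a + b) = g a + g b" "\<And>c a. g (sc c a) = sc c (g a)"
  shows "A.subspace {x. f x = g x}"
proof -
  have f0: "f 0 = 0" using lf(2)[of 0 0] by simp
  have g0: "g 0 = 0" using lg(2)[of 0 0] by simp
  show ?thesis unfolding A.subspace_def using f0 g0 lf lg by auto
qed

lemma eq_on_span_cl: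
  assumes lf: "\<And>a b. f (a + b) = f a + f b" "\<And>c a. f (sc c a) = sc c (f a)"
    and lg: "\<And>a b. g (a + b) = g a + g b" "\<And>c a. g (sc c a) = sc c (g a)"
    and eq: "\<And>p. isp p \<Longrightarrow> f (cl p) = g (cl p)"
  shows "f x = g x"
proof -
  have "x \<in> A.span {cl p | p. isp p}" using span_cl by simp
  then show ?thesis
  proof (induction rule: A.span_induct)
    case base show ?case by (rule subspace_Collect_eq[OF lf lg])
  next
    case (step x) then show ?case using eq by blast
  qed
qed

lemma unit_left: "mul one x = x"
proof (rule eq_on_span_cl[where f="\<lambda>x. mul one x" and g="\<lambda>x. x"])
  fix p assume p: "isp p"
  have "mul one (cl p) = (\<Sum>v\<in>V. mul (ev v) (cl p))" by (simp add: one_def mul_sum_left)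
  also have "\<dots> = (\<Sum>v\<in>V. if v = fst p then cl p else 0)"
    by (rule sum.cong[OF refl]) (simp add: ev_cl[OF p])
  also have "\<dots> = cl p" using start_in_V[OF p] finV by (simp add: sum.delta')
  finally show "mul one (cl p) = cl p" .
qed (auto simp: mul_add_right mul_sc_right)

lemma unit_right: "mul x one = x"
proof (rule eq_on_span_cl[where f="\<lambda>x. mul x one" and g="\<lambda>x. x"])
  fix p assume p: "isp p"
  have "mul (cl p) one = (\<Sum>v\<in>V. mul (cl p) (ev v))" by (simp add: one_def mul_sum_right)
  also have "\<dots> = (\<Sum>v\<in>V. if v = pend t p then cl p else 0)"
    by (rule sum.cong[OF refl]) (auto simp: cl_ev[OF p])
  also have "\<dots> = cl p" using pend_in_V[OF p] finV by (simp add: sum.delta)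
  finally show "mul (cl p) one = cl p" .
qed (auto simp: mul_add_left mul_sc_left)

lemma der_add: "d \<in> Der \<Longrightarrow> d (a + b) = d a + d b"
  and der_sc: "d \<in> Der \<Longrightarrow> d (sc c a) = sc c (d a)"
  and der_mul: "d \<in> Der \<Longrightarrow> d (mul a b) = mul (d a) b + mul a (d b)"
  by (auto simp: derivations_def is_derivation_def)

lemma der_zero: "d \<in> Der \<Longrightarrow> d 0 = 0"
  using der_add[of d 0 0] by simp

lemma der_minus: "d \<in> Der \<Longrightarrow> d (- a) = - d a"
  using der_add[of d a "- a"] der_zero[of d] by (simp add: eq_neg_iff_add_eq_0 add.commute)

lemma der_diff: "d \<in> Der \<Longrightarrow> d (a - b) = d a - d b"
  using der_add[of d a "- b"] der_minus[of d b] by simp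

lemma der_sum: "d \<in> Der \<Longrightarrow> d (sum f S) = (\<Sum>i\<in>S. d (f i))"
  by (induction S rule: infinite_finite_induct) (auto simp: der_zero der_add)

lemma Der_subspace: "FA.subspace Der"
  unfolding FA.subspace_def
proof (intro conjI ballI allI)
  show "0 \<in> Der" by (simp add: derivations_def is_derivation_def)
  fix c and x y :: "'a \<Rightarrow> 'a"
  assume x: "x \<in> Der"
  { assume y: "y \<in> Der"
    show "x + y \<in> Der" using x y
      by (auto simp: derivations_def is_derivation_def A.scale_right_distrib mul_add_left mul_add_right) }
  show "fscale sc c x \<in> Der" using x
    by (auto simp: derivations_def is_derivation_def fscale_def A.scale_right_distrib mul_sc_left mul_sc_right)
qed

lemma ad_apply: "ad a x = mul a x - mul x a" by (simp add: ad_def)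

lemma ad_Der: "ad a \<in> Der"
  unfolding derivations_def is_derivation_def
proof (intro CollectI conjI allI)
  fix x y c
  show "ad a (x + y) = ad a x + ad a y" by (simp add: ad_apply mul_add_left mul_add_right)
  show "ad a (sc c x) = sc c (ad a x)" by (simp add: ad_apply mul_sc_left mul_sc_right A.scale_right_diff_distrib)
  show "ad a (mul x y) = mul (ad a x) y + mul x (ad a y)"
    by (simp add: ad_apply mul_diff_left mul_diff_right mul_assoc)
qed

lemma ad_add: "ad (a + b) = ad a + ad b"
  by (rule ext) (simp add: ad_apply mul_add_left mul_add_right)

lemma ad_sc: "ad (sc c a) = fscale sc c (ad a)"
  by (rule ext) (simp add: ad_apply fscale_apply mul_sc_left mul_sc_right A.scale_right_diff_distrib)

lemma ad_linear: "Vector_Spaces.linear sc (fscale sc) ad"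
  unfolding Vector_Spaces.linear_iff using ad_add ad_sc vs vs_fscale by blast

lemma Inn_eq: "Inn = range ad"
  by (auto simp: inner_derivations_def ad_def)

lemma Inn_subspace: "FA.subspace Inn"
  unfolding Inn_eq
proof -
  interpret adl: Vector_Spaces.linear sc "fscale sc" ad by (rule ad_linear)
  show "FA.subspace (range ad)" using adl.subspace_image[OF A.subspace_UNIV] .
qed

lemma Inn_Der: "Inn \<subseteq> Der" unfolding Inn_eq using ad_Der by blast

lemma Nd_subspace: "FA.subspace Nd"
proof -
  have "Nd = Der \<inter> {d. \<forall>v\<in>V. d (ev v) = 0}" by (auto simp: Nd_def)
  moreover have "FA.subspace {d :: 'a \<Rightarrow> 'a. \<forall>v\<in>V. d (ev v) = 0}"
    unfolding FA.subspace_def by (auto simp: fscale_apply)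
  ultimately show ?thesis using FA.subspace_inter Der_subspace by simp
qed

lemma Nd_Der: "Nd \<subseteq> Der" by (auto simp: Nd_def)

subsection \<open>Normalisation of derivations\<close>

lemma one_minus: "w \<in> V \<Longrightarrow> one - ev w = (\<Sum>v\<in>V - {w}. ev v)"
  unfolding one_def using finV by (simp add: sum.remove)

lemma normalize:
  assumes d: "d \<in> Der"
  shows "\<exists>n\<in>Nd. \<exists>i\<in>Inn. d = n + i"
proof -
  define D where "D w = d (ev w)" for w
  define a where "a = (\<Sum>v\<in>V. mul (D v) (ev v))"
  have F1: "mul (ev w) (D v) = - mul (D w) (ev v)" if "v \<in> V" "w \<in> V" "v \<noteq> w" for v w
  proof -
    have "0 = d (mul (ev w) (ev v))" using that ev_ev der_zero[OF d] by simp
    also have "\<dots> = mul (D w) (ev v) + mul (ev w) (D v)" using der_mul[OF d] D_def by simp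
    finally show ?thesis by (simp add: eq_neg_iff_add_eq_0 add.commute)
  qed
  have F2: "D w = mul (D w) (ev w) + mul (ev w) (D w)" if "w \<in> V" for w
    using der_mul[OF d, of "ev w" "ev w"] ev_ev[OF that that] D_def by simp
  have X0: "mul (ev w) (mul (D w) (ev w)) = 0" if w: "w \<in> V" for w
  proof -
    let ?X = "mul (ev w) (mul (D w) (ev w))"
    have e: "mul (ev w) (ev w) = ev w" using ev_ev[OF w w] by simp
    have "?X = mul (ev w) (mul (mul (D w) (ev w) + mul (ev w) (D w)) (ev w))"
      using F2[OF w] by simp
    also have "\<dots> = mul (ev w) (mul (D w) (mul (ev w) (ev w))) + mul (mul (ev w) (ev w)) (mul (D w) (ev w))"
      by (simp add: mul_add_left mul_add_right mul_assoc)
    also have "\<dots> = ?X + ?X" using e by simp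
    finally show ?thesis by simp
  qed
  have nd: "(d - ad a) (ev w) = 0" if w: "w \<in> V" for w
  proof -
    have "mul a (ev w) = (\<Sum>v\<in>V. mul (D v) (mul (ev v) (ev w)))"
      by (simp add: a_def mul_sum_left mul_assoc)
    also have "\<dots> = (\<Sum>v\<in>V. if v = w then mul (D v) (ev v) else 0)"
      by (rule sum.cong[OF refl]) (simp add: ev_ev w)
    also have "\<dots> = mul (D w) (ev w)" using w finV by (simp add: sum.delta')
    finally have m1: "mul a (ev w) = mul (D w) (ev w)" .
    have "mul (ev w) a = (\<Sum>v\<in>V. mul (mul (ev w) (D v)) (ev v))"
      by (simp add: a_def mul_sum_right mul_assoc)
    also have "\<dots> = (\<Sum>v\<in>V. if v = w then 0 else - mul (D w) (ev v))"
    proof (rule sum.cong[OF refl])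
      fix v assume v: "v \<in> V"
      show "mul (mul (ev w) (D v)) (ev v) = (if v = w then 0 else - mul (D w) (ev v))"
      proof (cases "v = w")
        case True then show ?thesis using X0[OF w] by (simp add: mul_assoc)
      next
        case False
        then have "mul (mul (ev w) (D v)) (ev v) = - mul (D w) (mul (ev v) (ev v))"
          using F1[OF v w] by (simp add: mul_minus_left mul_assoc)
        then show ?thesis using False ev_ev[OF v v] by simp
      qed
    qed
    also have "\<dots> = (\<Sum>v\<in>V - {w}. - mul (D w) (ev v))"
      using finV w by (simp add: sum.If_cases Diff_eq Int_commute)
    also have "\<dots> = - mul (D w) (one - ev w)"
      by (simp add: one_minus[OF w] mul_sum_right sum_negf)
    also have "\<dots> = - (D w - mul (D w) (ev w))" by (simp add: mul_diff_right unit_right)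
    finally have m2: "mul (ev w) a = - (D w - mul (D w) (ev w))" .
    show ?thesis using m1 m2 by (simp add: ad_apply D_def)
  qed
  have "d - ad a \<in> Der"
    using FA.subspace_diff[OF Der_subspace d ad_Der] .
  then have "d - ad a \<in> Nd" using nd by (simp add: Nd_def)
  moreover have "ad a \<in> Inn" by (simp add: Inn_eq)
  ultimately show ?thesis by (metis diff_add_cancel)
qed

end


context qa begin

lemma ev_q_ev: "q \<in> Q \<Longrightarrow> v \<in> V \<Longrightarrow> mul (ev v) (mul q (ev v)) = (if q = ev v then q else 0)"
proof -
  assume qQ: "q \<in> Q" and vV: "v \<in> V"
  have "mul (ev v) (mul q (ev v)) = (if qs q = v \<and> qe q = v then q else 0)"
    using ev_q[OF qQ vV] q_ev[OF qQ vV] by auto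
  also have "\<dots> = (if q = ev v then q else 0)"
  proof (cases "qs q = v \<and> qe q = v")
    case True
    then obtain u where "u \<in> V" "q = ev u" using acyc qQ unfolding acyclic_wrt_def by metis
    then show ?thesis using True qs_ev by auto
  next
    case False
    then show ?thesis using qs_ev qe_ev vV by auto
  qed
  finally show ?thesis .
qed

lemma sandwich_span: assumes v: "v \<in> V" shows "mul (ev v) (mul b (ev v)) \<in> A.span (ev ` V)"
proof -
  have "b \<in> A.span Q" using Q_span by simp
  then show ?thesis
  proof (induction rule: A.span_induct)
    case base
    show ?case unfolding A.subspace_def
      by (auto simp: mul_add_left mul_add_right mul_sc_left mul_sc_right intro: A.span_add A.span_scale A.span_zero)
  next
    case (step q)
    then show ?case using ev_q_ev[OF step v] v by (auto intro: A.span_base A.span_zero)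
  qed
qed

lemma comm_span: assumes b: "b \<in> A.span (ev ` V)" and w: "w \<in> V"
  shows "mul b (ev w) = mul (ev w) b"
  using b
proof (induction rule: A.span_induct)
  case base
  show ?case by (rule subspace_Collect_eq) (auto simp: mul_add_left mul_add_right mul_sc_left mul_sc_right)
next
  case (step x)
  then show ?case using ev_ev w by auto
qed

lemma K_char: "Nd \<inter> Inn = ad ` A.span (ev ` V)"
proof
  show "Nd \<inter> Inn \<subseteq> ad ` A.span (ev ` V)"
  proof
    fix d assume d: "d \<in> Nd \<inter> Inn"
    then obtain b where db: "d = ad b" using Inn_eq by blast
    have comm: "mul b (ev v) = mul (ev v) b" if "v \<in> V" for v
      using d db that by (simp add: Nd_def ad_apply)
    have "b = mul one b" by (simp add: unit_left)
    also have "\<dots> = (\<Sum>v\<in>V. mul (ev v) b)" by (simp add: one_def mul_sum_left)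
    also have "\<dots> = (\<Sum>v\<in>V. mul (ev v) (mul b (ev v)))"
    proof (rule sum.cong[OF refl])
      fix v assume v: "v \<in> V"
      have "mul (ev v) b = mul (mul (ev v) (ev v)) b" using ev_ev[OF v v] by simp
      also have "\<dots> = mul (ev v) (mul b (ev v))" by (simp add: mul_assoc comm[OF v])
      finally show "mul (ev v) b = mul (ev v) (mul b (ev v))" .
    qed
    finally have "b = (\<Sum>v\<in>V. mul (ev v) (mul b (ev v)))" .
    moreover have "(\<Sum>v\<in>V. mul (ev v) (mul b (ev v))) \<in> A.span (ev ` V)"
      by (rule A.span_sum) (rule sandwich_span)
    ultimately have "b \<in> A.span (ev ` V)" by simp
    then show "d \<in> ad ` A.span (ev ` V)" using db by blast
  qed
  show "ad ` A.span (ev ` V) \<subseteq> Nd \<inter> Inn"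
  proof
    fix d assume "d \<in> ad ` A.span (ev ` V)"
    then obtain b where b: "b \<in> A.span (ev ` V)" "d = ad b" by blast
    have "d (ev w) = 0" if "w \<in> V" for w using comm_span[OF b(1) that] b(2) by (simp add: ad_apply)
    then show "d \<in> Nd \<inter> Inn" using b(2) ad_Der Inn_eq by (auto simp: Nd_def)
  qed
qed

lemma ad_one: "ad one = 0"
  by (rule ext) (simp add: ad_apply unit_left unit_right)

lemma K_dim: "FA.dim (Nd \<inter> Inn) = card V - 1"
proof -
  interpret adl: Vector_Spaces.linear sc "fscale sc" ad by (rule ad_linear)
  obtain v0 where v0: "v0 \<in> V" using Vne by blast
  define W0 where "W0 = ev ` (V - {v0})"
  have evV: "ev ` V = insert (ev v0) W0" using v0 by (auto simp: W0_def)
  have injev: "inj_on ev V" by (rule inj_onI) (rule ev_inj)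
  have W0Q: "W0 \<subseteq> Q" using ev_Q by (auto simp: W0_def)
  have W0ind: "A.independent W0" using A.independent_mono[OF Q_indep W0Q] .
  have finW0: "finite W0" using finV by (simp add: W0_def)
  define y where "y = (\<Sum>v\<in>V - {v0}. ev v)"
  have y: "y \<in> A.span W0" unfolding y_def W0_def by (intro A.span_sum A.span_base) blast
  have adv0: "ad (ev v0) = - ad y"
  proof -
    have "ev v0 = one - y" unfolding y_def one_minus[OF v0, symmetric] by simp
    then have "ad (ev v0) = ad one - ad y" using adl.diff[of one y] by simp
    then show ?thesis using ad_one by simp
  qed
  have eq1: "ad ` A.span (ev ` V) = ad ` A.span W0"
  proof
    show "ad ` A.span W0 \<subseteq> ad ` A.span (ev ` V)"
      using A.span_mono[of W0 "ev ` V"] evV by blast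
    show "ad ` A.span (ev ` V) \<subseteq> ad ` A.span W0"
    proof
      fix d assume "d \<in> ad ` A.span (ev ` V)"
      then obtain b where b: "b \<in> A.span (insert (ev v0) W0)" "d = ad b" using evV by auto
      then obtain k where k: "b - sc k (ev v0) \<in> A.span W0" using A.span_breakdown_eq by blast
      define b1 where "b1 = b - sc k (ev v0)"
      have "ad b = ad (b1 + sc k (ev v0))" by (simp add: b1_def)
      also have "\<dots> = ad b1 + fscale sc k (ad (ev v0))" using adl.add adl.scale by simp
      also have "\<dots> = ad b1 - fscale sc k (ad y)" using adv0 FA.scale_minus_right by simp
      also have "\<dots> = ad (b1 - sc k y)" using adl.diff adl.scale by simp
      finally have "d = ad (b1 - sc k y)" using b by simp
      moreover have "b1 - sc k y \<in> A.span W0"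
      proof -
        have "b1 \<in> A.span W0" using k b1_def by simp
        then show ?thesis by (rule A.span_diff[OF _ A.span_scale[OF y]])
      qed
      ultimately show "d \<in> ad ` A.span W0" by blast
    qed
  qed
  have inj: "inj_on ad (A.span W0)"
    unfolding adl.inj_on_iff_eq_0[OF A.subspace_span]
  proof (intro ballI impI)
    fix b assume b: "b \<in> A.span W0" and adb: "ad b = 0"
    obtain u where u: "b = (\<Sum>w\<in>W0. sc (u w) w)" using b A.span_finite[OF finW0] by blast
    define c where "c v = (if v = v0 then 0 else u (ev v))" for v
    have injW: "inj_on ev (V - {v0})" using injev by (auto intro: inj_on_subset)
    have "b = (\<Sum>v\<in>V - {v0}. sc (u (ev v)) (ev v))"
      unfolding u W0_def by (simp add: sum.reindex[OF injW])
    also have "\<dots> = (\<Sum>v\<in>V - {v0}. sc (c v) (ev v))"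
      by (rule sum.cong[OF refl]) (simp add: c_def)
    also have "\<dots> = (\<Sum>v\<in>V. sc (c v) (ev v))"
      using finV v0 by (simp add: sum.remove[of V v0] c_def)
    finally have bc: "b = (\<Sum>v\<in>V. sc (c v) (ev v))" .
    have ceq: "c (s r) = c (t r)" if r: "r \<in> E" for r
    proof -
      have arQ: "ar r \<in> Q" using ar_Q[OF r] .
      have sV: "s r \<in> V" and tV: "t r \<in> V" using sE tE r by auto
      have "mul b (ar r) = (\<Sum>v\<in>V. sc (c v) (mul (ev v) (ar r)))"
        by (simp add: bc mul_sum_left mul_sc_left)
      also have "\<dots> = (\<Sum>v\<in>V. if v = s r then sc (c v) (ar r) else 0)"
        by (rule sum.cong[OF refl]) (auto simp: ev_q[OF arQ] qs_ar[OF r])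
      also have "\<dots> = sc (c (s r)) (ar r)" using sV finV by (simp add: sum.delta')
      finally have m1: "mul b (ar r) = sc (c (s r)) (ar r)" .
      have "mul (ar r) b = (\<Sum>v\<in>V. sc (c v) (mul (ar r) (ev v)))"
        by (simp add: bc mul_sum_right mul_sc_right)
      also have "\<dots> = (\<Sum>v\<in>V. if v = t r then sc (c v) (ar r) else 0)"
        by (rule sum.cong[OF refl]) (auto simp: q_ev[OF arQ] qe_ar[OF r])
      also have "\<dots> = sc (c (t r)) (ar r)" using tV finV by (simp add: sum.delta')
      finally have m2: "mul (ar r) b = sc (c (t r)) (ar r)" .
      have "ad b (ar r) = 0" using adb by simp
      then have "sc (c (s r)) (ar r) = sc (c (t r)) (ar r)" using m1 m2 by (simp add: ad_apply)
      then have "sc (c (s r) - c (t r)) (ar r) = 0" by (simp add: A.scale_left_diff_distrib)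
      then show ?thesis using Q_nz[OF arQ] by simp
    qed
    have call: "c w = 0" if w: "w \<in> V" for w
    proof -
      let ?R = "{(s e, t e) | e. e \<in> E} \<union> {(t e, s e) | e. e \<in> E}"
      have "(v0, w) \<in> ?R\<^sup>*" using quiv v0 w unfolding finite_connected_quiver_def by blast
      then have "c w = c v0"
      proof (induction rule: rtrancl_induct)
        case base then show ?case by simp
      next
        case (step y z)
        then have "c z = c y" using ceq by auto
        then show ?case using step by simp
      qed
      then show ?thesis by (simp add: c_def)
    qed
    show "b = 0" using bc call by simp
  qed
  have "FA.dim (Nd \<inter> Inn) = FA.dim (ad ` A.span W0)" using K_char eq1 by simp
  also have "\<dots> = A.dim (A.span W0)"
    using dim_image_inj[OF ad_linear _ inj] A.subspace_span by simp
  also have "\<dots> = card W0" using A.dim_span_eq_card_independent[OF W0ind] .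
  also have "\<dots> = card (V - {v0})" unfolding W0_def using injev by (simp add: card_image inj_on_subset)
  also have "\<dots> = card V - 1" using v0 finV by simp
  finally show ?thesis .
qed

end


lemma fsum_apply: "(sum f S) x = (\<Sum>i\<in>S. f i x)"
  by (induction S rule: infinite_finite_induct) auto

lemma sum_lessThan_add_split: "(\<Sum>i<m + (n::nat). f i) = (\<Sum>i<m. f i) + (\<Sum>i<n. f (m + i))"
  by (induction n) (auto simp: add.assoc)

lemma pend_take_Suc: "i < length es \<Longrightarrow> pend t (v, take (Suc i) es) = t (es ! i)"
  by (simp add: pend_def take_Suc_conv_app_nth)

context qa begin

abbreviation "isdo \<equiv> is_diffop V E s t \<pi> sc mul"

lemma isdo_add: "isdo D \<Longrightarrow> x \<in> P \<Longrightarrow> y \<in> P \<Longrightarrow> D (x + y) = D x + D y"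
  and isdo_mul: "isdo D \<Longrightarrow> x \<in> P \<Longrightarrow> y \<in> P \<Longrightarrow> D (pm x y) = mul (D x) (\<pi> y) + mul (\<pi> x) (D y)"
  and isdo_sc: "isdo D \<Longrightarrow> x \<in> P \<Longrightarrow> D (smulf c x) = sc c (D x)"
  and isdo_out: "isdo D \<Longrightarrow> x \<notin> P \<Longrightarrow> D x = 0"
  by (auto simp: is_diffop_def smulf_def)

lemma isdo_zero: "isdo D \<Longrightarrow> D 0 = 0"
  using isdo_add[of D 0 0] by simp

lemma isp_snoc: "isp (v, es @ [e]) \<Longrightarrow> isp (v, es) \<and> e \<in> E \<and> pend t (v, es) = s e"
proof -
  assume a: "isp (v, es @ [e])"
  have "isp (v, es)" using is_path_take[OF a, of "length es"] by simp
  moreover have "e \<in> E" using a by (auto simp: is_path_def)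
  moreover have "pend t (v, es) = s e"
  proof (cases "es = []")
    case True then show ?thesis using a by (auto simp: is_path_def pend_def)
  next
    case False
    have "t ((es @ [e]) ! (length es - 1)) = s ((es @ [e]) ! Suc (length es - 1))"
    proof -
      have "Suc (length es - 1) < length (es @ [e])" using False by simp
      then show ?thesis using a unfolding is_path_def snd_conv by blast
    qed
    then show ?thesis using False by (simp add: pend_def nth_append last_conv_nth)
  qed
  ultimately show ?thesis by blast
qed

lemma isdo_unique:
  assumes D1: "isdo D1" and D2: "isdo D2"
    and vert: "\<And>v. v \<in> V \<Longrightarrow> D1 (pvec (v, [])) = D2 (pvec (v, []))"
    and arr: "\<And>e. e \<in> E \<Longrightarrow> D1 (pvec (s e, [e])) = D2 (pvec (s e, [e]))"
  shows "D1 = D2"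
proof
  have pth: "D1 (pvec (v, es)) = D2 (pvec (v, es))" if "isp (v, es)" for v es
    using that
  proof (induction es rule: rev_induct)
    case Nil then show ?case using vert start_in_V by force
  next
    case (snoc e es)
    have h: "isp (v, es)" "e \<in> E" "pend t (v, es) = s e" using isp_snoc[OF snoc.prems] by auto
    have ia: "isp (s e, [e])" using isp_arrow[OF h(2)] .
    have eq: "pvec (v, es @ [e]) = pm (pvec (v, es)) (pvec (s e, [e]))"
      using h by (simp add: pvec_mult conc_def)
    show ?case unfolding eq
      using isdo_mul[OF D1 pvec_P[OF h(1)] pvec_P[OF ia]] isdo_mul[OF D2 pvec_P[OF h(1)] pvec_P[OF ia]]
        snoc.IH[OF h(1)] arr[OF h(2)] by simp
  qed
  fix x
  show "D1 x = D2 x"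
  proof (cases "x \<in> P")
    case True
    then show ?thesis
    proof (induction rule: P_induct)
      case zero
      have "D1 0 = D2 0" using isdo_zero[OF D1] isdo_zero[OF D2] by simp
      then show ?case by (simp add: zero_fun_def)
    next
      case (step x c p)
      have "D1 (x + smulf c (pvec p)) = D1 x + sc c (D1 (pvec p))"
        using isdo_add[OF D1 step(1) smulf_P[OF pvec_P[OF step(2)]]] isdo_sc[OF D1 pvec_P[OF step(2)]] by simp
      moreover have "D2 (x + smulf c (pvec p)) = D2 x + sc c (D2 (pvec p))"
        using isdo_add[OF D2 step(1) smulf_P[OF pvec_P[OF step(2)]]] isdo_sc[OF D2 pvec_P[OF step(2)]] by simp
      moreover have "D1 (pvec p) = D2 (pvec p)" using pth step(2) by (cases p) simp
      ultimately have "D1 (x + smulf c (pvec p)) = D2 (x + smulf c (pvec p))" using step(3) by simp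
      then show ?case .
    qed
  next
    case False then show ?thesis using isdo_out[OF D1] isdo_out[OF D2] by simp
  qed
qed

sublocale FD: vector_space "fscale sc :: 'k \<Rightarrow> ((('v,'e) qpath \<Rightarrow> 'k) \<Rightarrow> 'a) \<Rightarrow> _"
  by (rule vs_fscale[OF vs])

lemma isdo_subspace: "FD.subspace {D. isdo D}"
  unfolding FD.subspace_def
proof (intro conjI ballI allI)
  show "0 \<in> {D. isdo D}" by (simp add: is_diffop_def)
  fix c and D1 D2 :: "(('v,'e) qpath \<Rightarrow> 'k) \<Rightarrow> 'a"
  assume D1: "D1 \<in> {D. isdo D}"
  { assume D2: "D2 \<in> {D. isdo D}"
    show "D1 + D2 \<in> {D. isdo D}" using D1 D2
      by (auto simp: is_diffop_def A.scale_right_distrib mul_add_left mul_add_right) }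
  show "fscale sc c D1 \<in> {D. isdo D}" using D1
    by (auto simp: is_diffop_def fscale_def A.scale_right_distrib mul_sc_left mul_sc_right)
qed

end


context qa begin

definition delta :: "'e \<Rightarrow> 'a \<Rightarrow> ('v,'e) qpath \<Rightarrow> 'a" where
  "delta r q p = (\<Sum>i<length (snd p). if snd p ! i = r then
      mul (mul (cl (fst p, take i (snd p))) q) (cl (t r, drop (Suc i) (snd p))) else 0)"

definition Dex :: "'e \<Rightarrow> 'a \<Rightarrow> (('v,'e) qpath \<Rightarrow> 'k) \<Rightarrow> 'a" where
  "Dex r q x = (if x \<in> P then (\<Sum>p\<in>{p. x p \<noteq> 0}. sc (x p) (delta r q p)) else 0)"

lemma Dex_sum:
  assumes "x \<in> P" "finite S" "{p. x p \<noteq> 0} \<subseteq> S"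
  shows "Dex r q x = (\<Sum>p\<in>S. sc (x p) (delta r q p))"
  unfolding Dex_def using assms by (auto intro!: sum.mono_neutral_left)

lemma Dex_add: assumes "x \<in> P" "y \<in> P" shows "Dex r q (x + y) = Dex r q x + Dex r q y"
proof -
  let ?S = "{p. x p \<noteq> 0} \<union> {p. y p \<noteq> 0}"
  have f: "finite ?S" using assms by (simp add: P_def')
  have "Dex r q (x + y) = (\<Sum>p\<in>?S. sc ((x + y) p) (delta r q p))"
    by (rule Dex_sum) (use assms f add_P in auto)
  also have "\<dots> = (\<Sum>p\<in>?S. sc (x p) (delta r q p)) + (\<Sum>p\<in>?S. sc (y p) (delta r q p))"
    by (simp add: A.scale_left_distrib sum.distrib)
  also have "\<dots> = Dex r q x + Dex r q y"
    using Dex_sum[OF assms(1) f] Dex_sum[OF assms(2) f] by auto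
  finally show ?thesis .
qed

lemma Dex_sc: assumes "x \<in> P" shows "Dex r q (smulf c x) = sc c (Dex r q x)"
proof -
  let ?S = "{p. x p \<noteq> 0}"
  have f: "finite ?S" using assms by (simp add: P_def')
  have "Dex r q (smulf c x) = (\<Sum>p\<in>?S. sc (smulf c x p) (delta r q p))"
    by (rule Dex_sum) (use assms f smulf_P in \<open>auto simp: smulf_def\<close>)
  also have "\<dots> = sc c (\<Sum>p\<in>?S. sc (x p) (delta r q p))"
    by (simp add: smulf_def A.scale_sum_right)
  also have "\<dots> = sc c (Dex r q x)" using Dex_sum[OF assms f] by simp
  finally show ?thesis .
qed

lemma Dex_zero: "Dex r q 0 = 0" by (simp add: Dex_def)

lemma Dex_pvec: assumes "isp p" shows "Dex r q (pvec p) = delta r q p"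
proof -
  have "Dex r q (pvec p) = (\<Sum>p'\<in>{p}. sc (pvec p p') (delta r q p'))"
    by (rule Dex_sum) (use pvec_P[OF assms] in \<open>auto simp: pvec_def\<close>)
  then show ?thesis by (simp add: pvec_def)
qed

lemma suffix_path:
  assumes p: "isp (v, es)" and i: "i < length es"
  shows "isp (t (es ! i), drop (Suc i) es)" "pend t (t (es ! i), drop (Suc i) es) = pend t (v, es)"
proof -
  have e: "pend t (v, take (Suc i) es) = t (es ! i)" using pend_take_Suc[OF i] .
  show "isp (t (es ! i), drop (Suc i) es)" using is_path_drop[OF p sE tE, of "Suc i"] e by simp
  have "pend t (pend t (v, take (Suc i) es), take (length es - Suc i) (drop (Suc i) es)) =
        pend t (v, take (Suc i + (length es - Suc i)) es)"
    by (rule pend_take_drop) (use i in simp)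
  then show "pend t (t (es ! i), drop (Suc i) es) = pend t (v, es)" using e i by simp
qed

lemma delta_conc:
  assumes p: "isp p" and p': "isp p'" and e: "pend t p = fst p'"
  shows "delta r q (conc p p') = mul (delta r q p) (cl p') + mul (cl p) (delta r q p')"
proof -
  obtain v es where pv: "p = (v, es)" by (cases p)
  obtain w fs where pw: "p' = (w, fs)" by (cases p')
  have ip: "isp (v, es)" using p pv by simp
  have ip': "isp (w, fs)" using p' pw by simp
  have we: "w = pend t (v, es)" using e pv pw by simp
  let ?m = "length es" and ?n = "length fs"
  define T where "T i = (if (es @ fs) ! i = r then
      mul (mul (cl (v, take i (es @ fs))) q) (cl (t r, drop (Suc i) (es @ fs))) else 0)" for i
  define Tp where "Tp i = (if es ! i = r then
      mul (mul (cl (v, take i es)) q) (cl (t r, drop (Suc i) es)) else 0)" for i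
  define Tq where "Tq j = (if fs ! j = r then
      mul (mul (cl (w, take j fs)) q) (cl (t r, drop (Suc j) fs)) else 0)" for j
  have dc: "delta r q (conc p p') = (\<Sum>i<?m + ?n. T i)"
    by (simp add: delta_def conc_def pv pw T_def cong: if_cong)
  have dp: "delta r q p = (\<Sum>i<?m. Tp i)" by (simp add: delta_def pv Tp_def cong: if_cong)
  have dp': "delta r q p' = (\<Sum>j<?n. Tq j)" by (simp add: delta_def pw Tq_def cong: if_cong)
  have A1: "T i = mul (Tp i) (cl p')" if i: "i < ?m" for i
  proof (cases "es ! i = r")
    case True
    have sp: "isp (t (es ! i), drop (Suc i) es)" "pend t (t (es ! i), drop (Suc i) es) = pend t (v, es)"
      using suffix_path[OF ip i] by auto
    have "cl (t r, drop (Suc i) es @ fs) = mul (cl (t r, drop (Suc i) es)) (cl (w, fs))"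
      using cl_mult[OF sp(1) ip'] sp(2) we True by (simp add: conc_def)
    then show ?thesis using True i
      by (simp add: T_def Tp_def nth_append pw mul_assoc)
  next
    case False then show ?thesis using i by (simp add: T_def Tp_def nth_append)
  qed
  have A2: "T (?m + j) = mul (cl p) (Tq j)" if j: "j < ?n" for j
  proof (cases "fs ! j = r")
    case True
    have ipj: "isp (w, take j fs)" using is_path_take[OF ip'] .
    have "cl (v, es @ take j fs) = mul (cl (v, es)) (cl (w, take j fs))"
      using cl_mult[OF ip ipj] we by (simp add: conc_def)
    then show ?thesis using True j
      by (simp add: T_def Tq_def nth_append pv mul_assoc)
  next
    case False then show ?thesis using j by (simp add: T_def Tq_def nth_append)
  qed
  have "delta r q (conc p p') = (\<Sum>i<?m. T i) + (\<Sum>j<?n. T (?m + j))"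
    using dc sum_lessThan_add_split by simp
  also have "\<dots> = (\<Sum>i<?m. mul (Tp i) (cl p')) + (\<Sum>j<?n. mul (cl p) (Tq j))"
    using A1 A2 by simp
  also have "\<dots> = mul (delta r q p) (cl p') + mul (cl p) (delta r q p')"
    by (simp add: dp dp' mul_sum_left mul_sum_right)
  finally show ?thesis .
qed

lemma delta_nonconc:
  assumes p: "isp p" and p': "isp p'" and e: "pend t p \<noteq> fst p'"
  shows "mul (delta r q p) (cl p') = 0" "mul (cl p) (delta r q p') = 0"
proof -
  obtain v es where pv: "p = (v, es)" by (cases p)
  obtain w fs where pw: "p' = (w, fs)" by (cases p')
  have ip: "isp (v, es)" using p pv by simp
  have ip': "isp (w, fs)" using p' pw by simp
  have we: "w \<noteq> pend t (v, es)" using e pv pw by simp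
  have "mul (delta r q p) (cl p') = (\<Sum>i<length es. if es ! i = r then
      mul (mul (cl (v, take i es)) q) (mul (cl (t r, drop (Suc i) es)) (cl p')) else 0)"
    by (simp add: delta_def pv mul_sum_left mul_assoc if_distrib[of "\<lambda>x. mul x (cl p')"] cong: if_cong)
  also have "\<dots> = 0"
  proof (rule sum.neutral, intro ballI)
    fix i assume "i \<in> {..<length es}"
    then have i: "i < length es" by simp
    have sp: "isp (t (es ! i), drop (Suc i) es)" "pend t (t (es ! i), drop (Suc i) es) = pend t (v, es)"
      using suffix_path[OF ip i] by auto
    have "es ! i = r \<Longrightarrow> mul (cl (t r, drop (Suc i) es)) (cl p') = 0"
      using cl_mult[OF sp(1) p'] sp(2) we pw by auto
    then show "(if es ! i = r then mul (mul (cl (v, take i es)) q) (mul (cl (t r, drop (Suc i) es)) (cl p')) else 0) = 0"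
      by auto
  qed
  finally show "mul (delta r q p) (cl p') = 0" .
  have "mul (cl p) (delta r q p') = (\<Sum>j<length fs. if fs ! j = r then
      mul (mul (mul (cl p) (cl (w, take j fs))) q) (cl (t r, drop (Suc j) fs)) else 0)"
    by (simp add: delta_def pw mul_sum_right mul_assoc if_distrib[of "\<lambda>x. mul (cl p) x"] cong: if_cong)
  also have "\<dots> = 0"
  proof (rule sum.neutral, intro ballI)
    fix j assume "j \<in> {..<length fs}"
    have ipj: "isp (w, take j fs)" using is_path_take[OF ip'] .
    have "mul (cl p) (cl (w, take j fs)) = 0" using cl_mult[OF p ipj] e pw by simp
    then show "(if fs ! j = r then mul (mul (mul (cl p) (cl (w, take j fs))) q) (cl (t r, drop (Suc j) fs)) else 0) = 0"
      by simp
  qed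
  finally show "mul (cl p) (delta r q p') = 0" .
qed

lemma Dex_leibniz_paths:
  assumes p: "isp p" and p': "isp p'"
  shows "Dex r q (pm (pvec p) (pvec p')) = mul (Dex r q (pvec p)) (cl p') + mul (cl p) (Dex r q (pvec p'))"
proof (cases "pend t p = fst p'")
  case True
  have "isp (conc p p')" using is_path_conc(1)[OF p p' True] .
  then show ?thesis using True delta_conc[OF p p' True] by (simp add: pvec_mult Dex_pvec p p')
next
  case False
  then show ?thesis using delta_nonconc[OF p p' False] by (simp add: pvec_mult Dex_pvec p p' Dex_zero)
qed

lemma Dex_leibniz:
  assumes x: "x \<in> P" and y: "y \<in> P"
  shows "Dex r q (pm x y) = mul (Dex r q x) (\<pi> y) + mul (\<pi> x) (Dex r q y)"
proof -
  have L1: "Dex r q (pm (pvec p) y) = mul (Dex r q (pvec p)) (\<pi> y) + mul (cl p) (Dex r q y)"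
    if p: "isp p" for p
  proof (rule P_induct[where \<Phi>="\<lambda>y. Dex r q (pm (pvec p) y) = mul (Dex r q (pvec p)) (\<pi> y) + mul (cl p) (Dex r q y)"])
    show "y \<in> P" by (rule y)
    show "Dex r q (pm (pvec p) 0) = mul (Dex r q (pvec p)) (\<pi> 0) + mul (cl p) (Dex r q 0)"
      by (simp add: Dex_zero)
  next
    fix y :: "('v,'e) qpath \<Rightarrow> 'k" and c :: 'k and p'
    assume yP: "y \<in> P" and IH: "Dex r q (pm (pvec p) y) = mul (Dex r q (pvec p)) (\<pi> y) + mul (cl p) (Dex r q y)"
      and p': "isp p'"
    have pv: "pvec p \<in> P" "pvec p' \<in> P" using pvec_P[OF p] pvec_P[OF p'] by auto
    have s1: "smulf c (pvec p') \<in> P" using smulf_P pv by blast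
    have "pm (pvec p) (y + smulf c (pvec p')) = pm (pvec p) y + smulf c (pm (pvec p) (pvec p'))"
      by (simp add: pmult_add_right pmult_smulf_right)
    then have "Dex r q (pm (pvec p) (y + smulf c (pvec p'))) =
        Dex r q (pm (pvec p) y) + sc c (Dex r q (pm (pvec p) (pvec p')))"
      using Dex_add[OF pm_P[OF pv(1) yP] smulf_P[OF pm_P[OF pv]]] Dex_sc[OF pm_P[OF pv]] by simp
    also have "\<dots> = mul (Dex r q (pvec p)) (\<pi> (y + smulf c (pvec p'))) + mul (cl p) (Dex r q (y + smulf c (pvec p')))"
      using IH Dex_leibniz_paths[OF p p'] Dex_add[OF yP s1] Dex_sc[OF pv(2)] pi_add[OF yP s1] pi_smul[OF pv(2)]
      by (simp add: mul_add_left mul_add_right mul_sc_left mul_sc_right A.scale_right_distrib add_ac)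
    finally show "Dex r q (pm (pvec p) (y + smulf c (pvec p'))) =
        mul (Dex r q (pvec p)) (\<pi> (y + smulf c (pvec p'))) + mul (cl p) (Dex r q (y + smulf c (pvec p')))" .
  qed
  show ?thesis
  proof (rule P_induct[where \<Phi>="\<lambda>x. Dex r q (pm x y) = mul (Dex r q x) (\<pi> y) + mul (\<pi> x) (Dex r q y)"])
    show "x \<in> P" by (rule x)
    show "Dex r q (pm 0 y) = mul (Dex r q 0) (\<pi> y) + mul (\<pi> 0) (Dex r q y)"
      by (simp add: Dex_zero)
  next
    fix x :: "('v,'e) qpath \<Rightarrow> 'k" and c :: 'k and p
    assume xP: "x \<in> P" and IH: "Dex r q (pm x y) = mul (Dex r q x) (\<pi> y) + mul (\<pi> x) (Dex r q y)"
      and p: "isp p"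
    have pv: "pvec p \<in> P" using pvec_P[OF p] by auto
    have s1: "smulf c (pvec p) \<in> P" using smulf_P pv by blast
    have "pm (x + smulf c (pvec p)) y = pm x y + smulf c (pm (pvec p) y)"
      by (simp add: pmult_add_left pmult_smulf_left)
    then have "Dex r q (pm (x + smulf c (pvec p)) y) =
        Dex r q (pm x y) + sc c (Dex r q (pm (pvec p) y))"
      using Dex_add[OF pm_P[OF xP y] smulf_P[OF pm_P[OF pv y]]] Dex_sc[OF pm_P[OF pv y]] by simp
    also have "\<dots> = mul (Dex r q (x + smulf c (pvec p))) (\<pi> y) + mul (\<pi> (x + smulf c (pvec p))) (Dex r q y)"
      using IH L1[OF p] Dex_add[OF xP s1] Dex_sc[OF pv] pi_add[OF xP s1] pi_smul[OF pv]
      by (simp add: mul_add_left mul_add_right mul_sc_left mul_sc_right A.scale_right_distrib add_ac)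
    finally show "Dex r q (pm (x + smulf c (pvec p)) y) =
        mul (Dex r q (x + smulf c (pvec p))) (\<pi> y) + mul (\<pi> (x + smulf c (pvec p))) (Dex r q y)" .
  qed
qed

lemma Dex_isdo: "isdo (Dex r q)"
  unfolding is_diffop_def
proof (intro conjI ballI allI impI)
  fix x y :: "('v,'e) qpath \<Rightarrow> 'k" assume "x \<in> P" "y \<in> P"
  then show "Dex r q (x + y) = Dex r q x + Dex r q y" "Dex r q (pm x y) = mul (Dex r q x) (\<pi> y) + mul (\<pi> x) (Dex r q y)"
    using Dex_add Dex_leibniz by auto
next
  fix c and x :: "('v,'e) qpath \<Rightarrow> 'k" assume "x \<in> P"
  then show "Dex r q (\<lambda>p. c * x p) = sc c (Dex r q x)" using Dex_sc[of x r q c] by (simp add: smulf_def)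
next
  fix x :: "('v,'e) qpath \<Rightarrow> 'k" assume "x \<notin> P" then show "Dex r q x = 0" by (simp add: Dex_def)
qed

lemma Dex_vertex: "v \<in> V \<Longrightarrow> Dex r q (pvec (v, [])) = 0"
  by (simp add: Dex_pvec isp_vertex delta_def)

lemma Dex_arrow_other: "e \<in> E \<Longrightarrow> e \<noteq> r \<Longrightarrow> Dex r q (pvec (s e, [e])) = 0"
  by (simp add: Dex_pvec isp_arrow delta_def)

lemma Dex_arrow: assumes r: "r \<in> E" and q: "q \<in> Q" "s r = qs q" "t r = qe q"
  shows "Dex r q (pvec (s r, [r])) = q"
proof -
  have "Dex r q (pvec (s r, [r])) = mul (mul (ev (s r)) q) (ev (t r))"
    by (simp add: Dex_pvec isp_arrow[OF r] delta_def)
  also have "\<dots> = q" using ev_q[OF q(1)] q_ev[OF q(1)] q qs_V qe_V by simp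
  finally show ?thesis .
qed

abbreviation "Drs' r q \<equiv> Drs V E s t \<pi> sc mul r q"

lemma Drs_props:
  assumes r: "r \<in> E" and q: "q \<in> Q" "s r = qs q" "t r = qe q"
  shows "isdo (Drs' r q) \<and> Drs' r q (pvec (s r, [r])) = q \<and>
      (\<forall>e\<in>E. e \<noteq> r \<longrightarrow> Drs' r q (pvec (s e, [e])) = 0) \<and> (\<forall>v\<in>V. Drs' r q (pvec (v, [])) = 0)"
  unfolding Drs_def
proof (rule theI[where a="Dex r q"])
  show "isdo (Dex r q) \<and> Dex r q (pvec (s r, [r])) = q \<and>
      (\<forall>e\<in>E. e \<noteq> r \<longrightarrow> Dex r q (pvec (s e, [e])) = 0) \<and> (\<forall>v\<in>V. Dex r q (pvec (v, [])) = 0)"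
    using Dex_isdo Dex_arrow[OF r q] Dex_arrow_other Dex_vertex by blast
next
  fix D assume D: "isdo D \<and> D (pvec (s r, [r])) = q \<and>
      (\<forall>e\<in>E. e \<noteq> r \<longrightarrow> D (pvec (s e, [e])) = 0) \<and> (\<forall>v\<in>V. D (pvec (v, [])) = 0)"
  show "D = Dex r q"
  proof (rule isdo_unique)
    show "isdo D" "isdo (Dex r q)" using D Dex_isdo by auto
    show "D (pvec (v, [])) = Dex r q (pvec (v, []))" if "v \<in> V" for v using D that Dex_vertex by auto
    show "D (pvec (s e, [e])) = Dex r q (pvec (s e, [e]))" if "e \<in> E" for e
      using D that Dex_arrow[OF r q] Dex_arrow_other by (cases "e = r") auto
  qed
qed

end


context qa begin

definition Phi :: "('a \<Rightarrow> 'a) \<Rightarrow> (('v,'e) qpath \<Rightarrow> 'k) \<Rightarrow> 'a" where "Phi d = (\<lambda>x. if x \<in> P then d (\<pi> x) else 0)"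
definition "GD = {Drs' r q | r q. r \<in> E \<and> q \<in> Q \<and> s r = qs q \<and> t r = qe q}"
abbreviation "D2 \<equiv> frakD2 V E s t \<pi> sc mul Q"
abbreviation "F2 \<equiv> frakF2 V E s t I \<pi> sc mul Q"

lemma D2_eq: "D2 = FD.span GD" by (simp add: frakD2_def GD_def)

lemma Phi_add: "Phi (d1 + d2) = Phi d1 + Phi d2"
  unfolding Phi_def by (rule ext) auto

lemma Phi_sc: "Phi (fscale sc c d) = fscale sc c (Phi d)"
  unfolding Phi_def fscale_def by (rule ext) auto

lemma Phi_linear: "Vector_Spaces.linear (fscale sc) (fscale sc) Phi"
proof -
  have v1: "vector_space (fscale sc :: 'k \<Rightarrow> ('a \<Rightarrow> 'a) \<Rightarrow> _)" by (rule vs_fscale[OF vs])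
  have v2: "vector_space (fscale sc :: 'k \<Rightarrow> ((('v,'e) qpath \<Rightarrow> 'k) \<Rightarrow> 'a) \<Rightarrow> _)" by (rule vs_fscale[OF vs])
  show ?thesis unfolding Vector_Spaces.linear_iff using Phi_add Phi_sc v1 v2 by blast
qed

lemma Phi_inj: "inj Phi"
proof (rule injI)
  fix d1 d2 :: "'a \<Rightarrow> 'a" assume eq: "Phi d1 = Phi d2"
  show "d1 = d2"
  proof (rule ext)
    fix a obtain x where x: "x \<in> P" "a = \<pi> x" using pi_surj by blast
    have "Phi d1 x = Phi d2 x" using eq by simp
    then show "d1 a = d2 a" using x by (simp add: Phi_def)
  qed
qed

lemma Phi_isdo: assumes d: "d \<in> Der" shows "isdo (Phi d)"
  unfolding is_diffop_def
proof (intro conjI ballI allI impI)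
  fix x y :: "('v,'e) qpath \<Rightarrow> 'k" assume x: "x \<in> P" and y: "y \<in> P"
  show "Phi d (x + y) = Phi d x + Phi d y"
    using add_P[OF x y] der_add[OF d] pi_add[OF x y] x y by (simp add: Phi_def)
  show "Phi d (pm x y) = mul (Phi d x) (\<pi> y) + mul (\<pi> x) (Phi d y)"
    using pm_P[OF x y] der_mul[OF d] pi_mult[OF x y] x y by (simp add: Phi_def)
next
  fix c and x :: "('v,'e) qpath \<Rightarrow> 'k" assume x: "x \<in> P"
  show "Phi d (\<lambda>p. c * x p) = sc c (Phi d x)"
    using x smulf_P[OF x, of c] pi_smul[OF x, of c] der_sc[OF d] by (simp add: Phi_def smulf_def)
next
  fix x :: "('v,'e) qpath \<Rightarrow> 'k" assume "x \<notin> P"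
  then show "Phi d x = 0" by (simp add: Phi_def)
qed

lemma GD_finite: "finite GD"
proof -
  have "GD \<subseteq> (\<lambda>(r, q). Drs' r q) ` (E \<times> Q)" by (auto simp: GD_def)
  moreover have "finite ((\<lambda>(r, q). Drs' r q) ` (E \<times> Q))" using finE Q_finite by simp
  ultimately show ?thesis by (rule finite_subset)
qed

lemma D2_props: assumes "D \<in> D2" shows "isdo D \<and> (\<forall>v\<in>V. D (pvec (v, [])) = 0)"
proof -
  have eqs: "{D. isdo D \<and> (\<forall>v\<in>V. D (pvec (v, [])) = 0)} = {D. isdo D} \<inter> {D. \<forall>v\<in>V. D (pvec (v, [])) = 0}"
    by blast
  have sub: "FD.subspace {D. isdo D \<and> (\<forall>v\<in>V. D (pvec (v, [])) = 0)}"
    unfolding eqs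
  proof (rule FD.subspace_inter[OF isdo_subspace])
    show "FD.subspace {D :: (('v,'e) qpath \<Rightarrow> 'k) \<Rightarrow> 'a. \<forall>v\<in>V. D (pvec (v, [])) = 0}"
      unfolding FD.subspace_def by (auto simp: fscale_def)
  qed
  have "D \<in> FD.span GD" using assms D2_eq by simp
  then have "D \<in> {D. isdo D \<and> (\<forall>v\<in>V. D (pvec (v, [])) = 0)}"
  proof (induction rule: FD.span_induct)
    case base show ?case using sub by simp
  next
    case (step D)
    then obtain r q where rq: "D = Drs' r q" "r \<in> E" "q \<in> Q" "s r = qs q" "t r = qe q"
      by (auto simp: GD_def)
    show ?case using Drs_props[OF rq(2-5)] rq(1) by simp
  qed
  then show ?thesis by simp
qed

lemma Phi_Nd: assumes d: "d \<in> Nd" shows "Phi d \<in> F2"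
proof -
  have dD: "d \<in> Der" using d Nd_def by simp
  have dv: "d (ev v) = 0" if "v \<in> V" for v using d that Nd_def by simp
  define Qr where "Qr r = {q \<in> Q. s r = qs q \<and> t r = qe q}" for r
  obtain u where u: "\<And>r. d (ar r) = (\<Sum>q\<in>Q. sc (u r q) q)"
  proof -
    have "\<forall>r. \<exists>ur. d (ar r) = (\<Sum>q\<in>Q. sc (ur q) q)"
    proof
      fix r
      have "d (ar r) \<in> A.span Q" using Q_span by simp
      then show "\<exists>ur. d (ar r) = (\<Sum>q\<in>Q. sc (ur q) q)" using A.span_finite[OF Q_finite] by blast
    qed
    then show ?thesis using that by metis
  qed
  have dar: "d (ar r) = (\<Sum>q\<in>Qr r. sc (u r q) q)" if r: "r \<in> E" for r
  proof -
    have sV: "s r \<in> V" and tV: "t r \<in> V" using r sE tE by auto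
    have arr: "ar r = mul (ev (s r)) (mul (ar r) (ev (t r)))"
      using ev_left[OF isp_arrow[OF r]] ev_right[OF isp_arrow[OF r]] by (simp add: pend_def)
    have "d (ar r) = mul (ev (s r)) (mul (d (ar r)) (ev (t r)))"
      using arr der_mul[OF dD] dv sV tV by (metis add.right_neutral add_0 mul_zero_left mul_zero_right)
    also have "\<dots> = (\<Sum>q\<in>Q. sc (u r q) (mul (ev (s r)) (mul q (ev (t r)))))"
      by (simp add: u mul_sum_left mul_sum_right mul_sc_left mul_sc_right)
    also have "\<dots> = (\<Sum>q\<in>Q. if q \<in> Qr r then sc (u r q) q else 0)"
      by (rule sum.cong[OF refl]) (auto simp: ev_q q_ev sV tV Qr_def qs_V qe_V)
    also have "\<dots> = (\<Sum>q\<in>Qr r. sc (u r q) q)"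
      using Q_finite by (simp add: sum.If_cases Qr_def Int_def)
    finally show ?thesis .
  qed
  define G where "G = (\<Sum>r\<in>E. \<Sum>q\<in>Qr r. fscale sc (u r q) (Drs' r q))"
  have GD2: "G \<in> FD.span GD"
    unfolding G_def
  proof (intro FD.span_sum FD.span_scale FD.span_base)
    fix r q assume "r \<in> E" "q \<in> Qr r"
    then show "Drs' r q \<in> GD" by (auto simp: GD_def Qr_def)
  qed
  have Gp: "isdo G" "\<forall>v\<in>V. G (pvec (v, [])) = 0" using D2_props[of G] GD2 D2_eq by auto
  have GE: "G (pvec (s e, [e])) = d (ar e)" if e: "e \<in> E" for e
  proof -
    have "G (pvec (s e, [e])) = (\<Sum>r\<in>E. \<Sum>q\<in>Qr r. sc (u r q) (Drs' r q (pvec (s e, [e]))))"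
      by (simp add: G_def fsum_apply fscale_def)
    also have "\<dots> = (\<Sum>r\<in>E. if r = e then (\<Sum>q\<in>Qr r. sc (u r q) q) else 0)"
    proof (rule sum.cong[OF refl])
      fix r assume r: "r \<in> E"
      show "(\<Sum>q\<in>Qr r. sc (u r q) (Drs' r q (pvec (s e, [e])))) = (if r = e then (\<Sum>q\<in>Qr r. sc (u r q) q) else 0)"
      proof (cases "r = e")
        case True
        then show ?thesis using Drs_props[OF r] by (auto simp: Qr_def intro!: sum.cong)
      next
        case False
        then show ?thesis using Drs_props[OF r] e by (auto simp: Qr_def intro!: sum.neutral)
      qed
    qed
    also have "\<dots> = (\<Sum>q\<in>Qr e. sc (u e q) q)" using e finE by (simp add: sum.delta')
    also have "\<dots> = d (ar e)" using dar[OF e] by simp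
    finally show ?thesis .
  qed
  have "Phi d = G"
  proof (rule isdo_unique)
    show "isdo (Phi d)" by (rule Phi_isdo[OF dD])
    show "isdo G" by (rule Gp(1))
    show "Phi d (pvec (v, [])) = G (pvec (v, []))" if "v \<in> V" for v
      unfolding Phi_def if_P[OF pvec_P[OF isp_vertex[OF that]]] using that Gp(2) dv by simp
    show "Phi d (pvec (s e, [e])) = G (pvec (s e, [e]))" if "e \<in> E" for e
      unfolding Phi_def if_P[OF pvec_P[OF isp_arrow[OF that]]] using GE[OF that] by simp
  qed
  then have "Phi d \<in> D2" using GD2 D2_eq by simp
  moreover have "Phi d x = 0" if "x \<in> I" for x
  proof -
    have "x \<in> P" using that I_P by blast
    moreover have "\<pi> x = 0" using that pi_ker \<open>x \<in> P\<close> by blast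
    ultimately show ?thesis using der_zero[OF dD] by (simp add: Phi_def)
  qed
  ultimately show ?thesis by (simp add: frakF2_def)
qed

lemma F2_Phi: assumes D: "D \<in> F2" shows "\<exists>d\<in>Nd. D = Phi d"
proof -
  have D2: "D \<in> D2" and DI: "\<And>x. x \<in> I \<Longrightarrow> D x = 0" using D by (auto simp: frakF2_def)
  have Dp: "isdo D" "\<And>v. v \<in> V \<Longrightarrow> D (pvec (v, [])) = 0" using D2_props[OF D2] by auto
  define pre where "pre a = (SOME x. x \<in> P \<and> \<pi> x = a)" for a
  have pre: "pre a \<in> P \<and> \<pi> (pre a) = a" for a
  proof -
    obtain x where "x \<in> P" "a = \<pi> x" using pi_surj by blast
    then have "\<exists>x. x \<in> P \<and> \<pi> x = a" by blast
    then show ?thesis unfolding pre_def by (rule someI_ex)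
  qed
  define d where "d a = D (pre a)" for a
  have Dd: "D x = d (\<pi> x)" if x: "x \<in> P" for x
  proof -
    let ?x' = "pre (\<pi> x)"
    have x'P: "?x' \<in> P" and px': "\<pi> ?x' = \<pi> x" using pre by auto
    have "x - ?x' \<in> P" using diff_P[OF x x'P] .
    moreover have "\<pi> (x - ?x') = 0" using pi_diff[OF x x'P] px' by simp
    ultimately have "x - ?x' \<in> I" using pi_ker by blast
    then have "D (x - ?x') = 0" using DI by blast
    moreover have "D x = D ?x' + D (x - ?x')" using isdo_add[OF Dp(1) x'P \<open>x - ?x' \<in> P\<close>] by simp
    ultimately show ?thesis by (simp add: d_def)
  qed
  have dDer: "d \<in> Der"
    unfolding derivations_def is_derivation_def
  proof (intro CollectI conjI allI)
    fix a b c
    obtain x where x: "x \<in> P" "a = \<pi> x" using pi_surj by blast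
    obtain y where y: "y \<in> P" "b = \<pi> y" using pi_surj by blast
    show "d (a + b) = d a + d b"
      using Dd[OF add_P[OF x(1) y(1)]] Dd[OF x(1)] Dd[OF y(1)] isdo_add[OF Dp(1) x(1) y(1)] pi_add[OF x(1) y(1)] x y
      by simp
    show "d (sc c a) = sc c (d a)"
      using Dd[OF smulf_P[OF x(1)]] Dd[OF x(1)] isdo_sc[OF Dp(1) x(1)] pi_smul[OF x(1)] x by simp
    show "d (mul a b) = mul (d a) b + mul a (d b)"
      using Dd[OF pm_P[OF x(1) y(1)]] Dd[OF x(1)] Dd[OF y(1)] isdo_mul[OF Dp(1) x(1) y(1)] pi_mult[OF x(1) y(1)] x y
      by simp
  qed
  have "d (ev v) = 0" if v: "v \<in> V" for v
    using Dd[OF pvec_P[OF isp_vertex[OF v]]] Dp(2)[OF v] by simp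
  then have "d \<in> Nd" using dDer by (simp add: Nd_def)
  moreover have "D = Phi d"
  proof
    fix x show "D x = Phi d x"
    proof (cases "x \<in> P")
      case True then show ?thesis using Dd[OF True] by (simp add: Phi_def)
    next
      case False then show ?thesis using isdo_out[OF Dp(1) False] by (simp add: Phi_def)
    qed
  qed
  ultimately show ?thesis by blast
qed

lemma Phi_image: "Phi ` Nd = F2"
  using Phi_Nd F2_Phi by blast

lemma dim_Nd: "FA.dim Nd = FD.dim F2"
  using dim_image_inj[OF Phi_linear Nd_subspace inj_on_subset[OF Phi_inj subset_UNIV]] Phi_image by simp

lemma Nd_fin: "\<exists>B. finite B \<and> Nd \<subseteq> FA.span B \<and> B \<subseteq> Nd"
proof -
  interpret Pl: Vector_Spaces.linear "fscale sc" "fscale sc" Phi by (rule Phi_linear)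
  obtain B where B: "B \<subseteq> Nd" "FA.independent B" "Nd \<subseteq> FA.span B" "card B = FA.dim Nd"
    using FA.basis_exists by blast
  have ind: "FD.independent (Phi ` B)"
    using Pl.independent_injective_image[OF B(2)] inj_on_subset[OF Phi_inj subset_UNIV] by blast
  have "Phi ` B \<subseteq> FD.span GD" using B(1) Phi_Nd D2_eq by (auto simp: frakF2_def)
  then have "finite (Phi ` B)" using FD.independent_span_bound[OF GD_finite ind] by blast
  then have "finite B" using finite_imageD inj_on_subset[OF Phi_inj subset_UNIV] by blast
  then show ?thesis using B by blast
qed

lemma Inn_span: "Inn \<subseteq> FA.span (ad ` Q)"
proof -
  interpret adl: Vector_Spaces.linear sc "fscale sc" ad by (rule ad_linear)
  have "FA.span (ad ` Q) = ad ` A.span Q" using adl.span_image .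
  then show ?thesis unfolding Inn_eq Q_span by simp
qed

theorem main: "int (hh1_dim sc mul) = int (FD.dim F2) + 1 - int (card V)"
proof -
  define K where "K = Nd \<inter> Inn"
  have Ksub: "FA.subspace K" unfolding K_def using FA.subspace_inter[OF Nd_subspace Inn_subspace] .
  have KN: "K \<subseteq> Nd" unfolding K_def by blast
  obtain BN where BN: "finite BN" "Nd \<subseteq> FA.span BN" "BN \<subseteq> Nd" using Nd_fin by blast
  obtain C0 where C0: "FA.subspace C0" "C0 \<subseteq> Nd" "C0 \<inter> K \<subseteq> {0}" "Nd = {c + k | c k. c \<in> C0 \<and> k \<in> K}"
    using FA.exists_complement[OF Ksub Nd_subspace KN] by blast
  have dNd: "FA.dim Nd = FA.dim C0 + FA.dim K"
    by (rule FA.dim_direct_sum[OF C0(1) Ksub C0(3) C0(4) BN(1) BN(2)])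
  define F where "F = BN \<union> ad ` Q"
  have finF: "finite F" using BN(1) Q_finite by (simp add: F_def)
  have DerF: "Der \<subseteq> FA.span F"
  proof
    fix d assume "d \<in> Der"
    then obtain n i where ni: "n \<in> Nd" "i \<in> Inn" "d = n + i" using normalize by blast
    have "n \<in> FA.span F" using ni(1) BN(2) FA.span_mono[of BN F] by (auto simp: F_def)
    moreover have "i \<in> FA.span F" using ni(2) Inn_span FA.span_mono[of "ad ` Q" F] by (auto simp: F_def)
    ultimately show "d \<in> FA.span F" using ni(3) FA.span_add by simp
  qed
  define cprop where "cprop C \<longleftrightarrow> FA.subspace C \<and> C \<subseteq> Der \<and> C \<inter> Inn = {0} \<and>
      (\<forall>u\<in>Der. \<exists>c\<in>C. \<exists>w\<in>Inn. u = c + w)" for C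
  have dimC: "FA.dim Der = FA.dim C + FA.dim Inn" if pC: "cprop C" for C
  proof (rule FA.dim_direct_sum)
    show "FA.subspace C" "FA.subspace Inn" "C \<inter> Inn \<subseteq> {0}" using pC Inn_subspace by (auto simp: cprop_def)
    show "Der = {c + w | c w. c \<in> C \<and> w \<in> Inn}"
    proof
      show "Der \<subseteq> {c + w | c w. c \<in> C \<and> w \<in> Inn}" using pC unfolding cprop_def by blast
      show "{c + w | c w. c \<in> C \<and> w \<in> Inn} \<subseteq> Der"
        using pC Inn_Der FA.subspace_add[OF Der_subspace] by (auto simp: cprop_def)
    qed
    show "finite F" "Der \<subseteq> FA.span F" by (rule finF, rule DerF)
  qed
  have pC0: "cprop C0"
    unfolding cprop_def
  proof (intro conjI ballI)
    show "FA.subspace C0" by (rule C0(1))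
    show "C0 \<subseteq> Der" using C0(2) Nd_Der by blast
    show "C0 \<inter> Inn = {0}"
    proof
      show "C0 \<inter> Inn \<subseteq> {0}" using C0(2,3) K_def by blast
      show "{0} \<subseteq> C0 \<inter> Inn" using FA.subspace_0[OF C0(1)] FA.subspace_0[OF Inn_subspace] by blast
    qed
    fix u assume "u \<in> Der"
    then obtain n i where ni: "n \<in> Nd" "i \<in> Inn" "u = n + i" using normalize by blast
    then obtain c k where ck: "n = c + k" "c \<in> C0" "k \<in> K" using C0(4) by blast
    have "k + i \<in> Inn" using ck(3) ni(2) FA.subspace_add[OF Inn_subspace] K_def by blast
    moreover have "u = c + (k + i)" using ni(3) ck(1) by (simp add: add.assoc)
    ultimately show "\<exists>c\<in>C0. \<exists>w\<in>Inn. u = c + w" using ck(2) by blast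
  qed
  define C where "C = (SOME C. cprop C)"
  have pC: "cprop C" unfolding C_def using pC0 by (rule someI)
  have hh: "hh1_dim sc mul = FA.dim C"
    unfolding hh1_dim_def quot_dim_def C_def cprop_def by simp
  have "FA.dim C = FA.dim C0" using dimC[OF pC] dimC[OF pC0] by simp
  moreover have "FA.dim K = card V - 1" using K_dim K_def by simp
  moreover have "card V \<ge> 1" using finV Vne by (simp add: Suc_le_eq card_gt_0_iff)
  ultimately show ?thesis using hh dNd dim_Nd by simp
qed

end


theorem corollary4p4:
  fixes V :: "'v set" and E :: "'e set" and s t :: "'e \<Rightarrow> 'v"
    and I :: "(('v,'e) qpath \<Rightarrow> 'k::field) set"
    and \<pi> :: "(('v,'e) qpath \<Rightarrow> 'k) \<Rightarrow> 'a::ab_group_add"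
    and sc :: "'k \<Rightarrow> 'a \<Rightarrow> 'a" and mul :: "'a \<Rightarrow> 'a \<Rightarrow> 'a"
    and Q :: "'a set"
  assumes "finite_connected_quiver V E s t"
    and "is_ideal V E s t I"
    and "I \<subseteq> arrow_ideal_sq V E s t"
    and "quotient_presentation V E s t I \<pi> sc mul"
    and "path_basis V E s t \<pi> sc Q"
    and "acyclic_wrt V E s t \<pi> Q"
  shows "int (hh1_dim sc mul) =
         int (vector_space.dim (fscale sc) (frakF2 V E s t I \<pi> sc mul Q)) + 1 - int (card V)"
proof -
  interpret qa V E s t I \<pi> sc mul Q
    by (rule qa.intro) (fact assms)+
  show ?thesis using main by simp
qed

end
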